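(* With the notation of the context, for all fixed frequencies, $$|S_k|\lesssim\min\big((N_2\wedge N_3)^{2-\alpha}\log(2+N_1)+N_1,\ (N_1\wedge N_2)^{2-\alpha}\log(2+N_3)+N_3\big),$$ $$|S_{k_1}|\lesssim\min\big(N_3^{2-\alpha}\log(2+N_2)+N_2,\ N_2^{2-\alpha}\log(2+N_3)+N_3\big),$$ $$|S_{k_2}|\lesssim\min\big(N_3^{2-\alpha}\log(2+N_1)+N_1,\ N_1^{2-\alpha}\log(2+N_3)+N_3\big),$$ $$|S_{k_3}|\lesssim\min\big(N_1^{2-\alpha}\log(2+N_2)+N_2,\ N_2^{2-\alpha}\log(2+N_1)+N_1\big).$$
   Context: Fix $\alpha\in(1,2)$, dyadic numbers $1\le N_1,N_2,N_3\le N$, a real number $m$ and a constant $C_0>0$. Let $S$ be the set of $(k,k_1,k_2,k_3)\in\mathbb Z^4$ with $k=k_1-k_2+k_3$, $k_2\notin\{k_1,k_3\}$, $\big||k_1|^\alpha-|k_2|^\alpha+|k_3|^\alpha-|k|^\alpha-m\big|\le C_0$, $|k|\le N$ and $|k_j|\le N_j$ for $j=1,2,3$. When some of the variables are fixed, $S$ with those variables as subscripts denotes the set of the remaining variables for which the quadruple lies in $S$ (e.g. $S_{k_1}=\{(k,k_2,k_3):(k,k_1,k_2,k_3)\in S\}$). $|A|$ is the cardinality of $A$, $a\wedge b=\min(a,b)$. $A\lesssim B$ means $A\le CB$ with $C$ depending only on $\alpha$ and $C_0$. *)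

theory Defs
  imports Complex_Main
begin

definition dyadic :: "nat \<Rightarrow> bool" where
  "dyadic M \<longleftrightarrow> (\<exists>j::nat. M = 2 ^ j)"

definition Sres :: "real \<Rightarrow> real \<Rightarrow> real \<Rightarrow> nat \<Rightarrow> nat \<Rightarrow> nat \<Rightarrow> nat
    \<Rightarrow> (int \<times> int \<times> int \<times> int) set" where
  "Sres \<alpha> C0 m N N1 N2 N3 =
     {(k, k1, k2, k3). k = k1 - k2 + k3 \<and> k2 \<noteq> k1 \<and> k2 \<noteq> k3 \<and>
        \<bar>\<bar>real_of_int k1\<bar> powr \<alpha> - \<bar>real_of_int k2\<bar> powr \<alpha> + \<bar>real_of_int k3\<bar> powr \<alpha>
          - \<bar>real_of_int k\<bar> powr \<alpha> - m\<bar> \<le> C0 \<and>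
        \<bar>k\<bar> \<le> int N \<and> \<bar>k1\<bar> \<le> int N1 \<and> \<bar>k2\<bar> \<le> int N2 \<and> \<bar>k3\<bar> \<le> int N3}"

end

theory Submission
  imports Defs "HOL-Analysis.Harmonic_Numbers"
begin


definition ps :: "real \<Rightarrow> real \<Rightarrow> real" where "ps a t = \<bar>t\<bar> powr a"
definition ph :: "real \<Rightarrow> real \<Rightarrow> real" where "ph a t = sgn t * \<bar>t\<bar> powr (a - 1)"

lemma ps_deriv:
  assumes "t \<noteq> 0"
  shows "(ps a has_real_derivative a * ph a t) (at t)"
proof (cases "t > 0")
  case True
  have ev: "eventually (\<lambda>x. ps a x = x powr a) (nhds t)"
  proof -
    have "eventually (\<lambda>x. x \<in> {0<..}) (nhds t)" by (rule eventually_nhds_in_open) (use True in auto)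
    then show ?thesis by eventually_elim (simp add: ps_def)
  qed
  have "((\<lambda>x. x powr a) has_real_derivative a * t powr (a - 1)) (at t)"
    using True by (rule has_real_derivative_powr)
  then show ?thesis using True ev
    by (subst DERIV_cong_ev[OF refl ev refl]) (simp add: ph_def)
next
  case False
  with assms have neg: "t < 0" by simp
  have ev: "eventually (\<lambda>x. ps a x = (-x) powr a) (nhds t)"
  proof -
    have "eventually (\<lambda>x. x \<in> {..<0}) (nhds t)" by (rule eventually_nhds_in_open) (use neg in auto)
    then show ?thesis by eventually_elim (simp add: ps_def)
  qed
  have "((\<lambda>x. (-x) powr a) has_real_derivative a * (-t) powr (a - 1) * (-1)) (at t)"
    using neg by (auto intro!: derivative_eq_intros)
  then show ?thesis using neg
    by (subst DERIV_cong_ev[OF refl ev refl]) (simp add: ph_def)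
qed

lemma ps_cont: "0 < a \<Longrightarrow> continuous_on S (ps a)"
  unfolding ps_def by (rule continuous_on_powr') (auto intro!: continuous_intros)

lemma pos_ineq:
  fixes b u v M :: real
  assumes "0 < b" "b < 1" "0 < u" "u < v" "v \<le> M"
  shows "v powr b - u powr b \<ge> b * M powr (b - 1) * (v - u)"
proof -
  have "\<And>x. u \<le> x \<Longrightarrow> x \<le> v \<Longrightarrow> ((\<lambda>x. x powr b) has_real_derivative b * x powr (b - 1)) (at x)"
    using assms by (auto intro!: has_real_derivative_powr)
  from MVT2[OF \<open>u < v\<close> this] obtain z where z: "u < z" "z < v"
    "v powr b - u powr b = (v - u) * (b * z powr (b - 1))" by blast
  have "M powr (b - 1) \<le> z powr (b - 1)"
    using assms z by (intro powr_mono2') auto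
  then have "b * M powr (b - 1) \<le> b * z powr (b - 1)" using assms by simp
  then have "b * M powr (b - 1) * (v - u) \<le> b * z powr (b - 1) * (v - u)" using z by (intro mult_right_mono) auto
  moreover have "v powr b - u powr b = b * z powr (b - 1) * (v - u)" using z(3) by (simp add: algebra_simps)
  ultimately show ?thesis by linarith
qed

lemma small_ineq:
  fixes b x M :: real
  assumes "0 < b" "b \<le> 1" "0 < x" "x \<le> M"
  shows "x powr b \<ge> b * M powr (b - 1) * x"
proof -
  have "x powr b = x * x powr (b - 1)" using assms by (simp add: powr_diff)
  moreover have "M powr (b - 1) \<le> x powr (b - 1)" using assms by (intro powr_mono2') auto
  moreover have "b * M powr (b - 1) \<le> M powr (b - 1)" using assms by (simp add: mult_le_cancel_right1)
  ultimately show ?thesis using assms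
    by (metis (no_types, opaque_lifting) mult.commute mult_left_mono order_trans less_eq_real_def)
qed

lemma phi_ineq:
  assumes "1 < \<alpha>" "\<alpha> < 2" "a < b" "a \<noteq> 0" "b \<noteq> 0" "\<bar>a\<bar> \<le> M" "\<bar>b\<bar> \<le> M"
  shows "ph \<alpha> b - ph \<alpha> a \<ge> (\<alpha> - 1) * M powr (\<alpha> - 2) * (b - a)"
proof -
  have e: "\<alpha> - 1 - 1 = \<alpha> - 2" by simp
  consider "0 < a" | "b < 0" | "a < 0" "0 < b" using assms by linarith
  then show ?thesis
  proof cases
    case 1
    then have "b powr (\<alpha>-1) - a powr (\<alpha>-1) \<ge> (\<alpha>-1) * M powr (\<alpha>-1-1) * (b - a)"
      using assms by (intro pos_ineq) auto
    then show ?thesis using 1 assms by (simp add: ph_def e)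
  next
    case 2
    then have "(-a) powr (\<alpha>-1) - (-b) powr (\<alpha>-1) \<ge> (\<alpha>-1) * M powr (\<alpha>-1-1) * ((-a) - (-b))"
      using assms by (intro pos_ineq) auto
    then show ?thesis using 2 assms by (simp add: ph_def e)
  next
    case 3
    have h1: "b powr (\<alpha>-1) \<ge> (\<alpha>-1) * M powr (\<alpha>-1-1) * b"
      using assms 3 by (intro small_ineq) auto
    have h2: "(-a) powr (\<alpha>-1) \<ge> (\<alpha>-1) * M powr (\<alpha>-1-1) * (-a)"
      using assms 3 by (intro small_ineq) auto
    have "ph \<alpha> b - ph \<alpha> a = b powr (\<alpha>-1) + (-a) powr (\<alpha>-1)" using 3 by (simp add: ph_def)
    then show ?thesis using h1 h2 unfolding e by (simp add: algebra_simps)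
  qed
qed

lemma mvt_step:
  fixes f :: "real \<Rightarrow> real"
  assumes "a < b" "continuous_on {a..b} f" "\<And>t. a < t \<Longrightarrow> t < b \<Longrightarrow> DERIV f t :> f' t"
  shows "\<exists>\<xi>. a < \<xi> \<and> \<xi> < b \<and> f b - f a = (b - a) * f' \<xi>"
proof -
  have "\<And>t. a < t \<Longrightarrow> t < b \<Longrightarrow> f differentiable (at t)"
    using assms(3) real_differentiable_def by blast
  from MVT[OF assms(1,2) this] obtain l z where "a < z" "z < b" "DERIV f z :> l" "f b - f a = (b - a) * l"
    by blast
  moreover have "l = f' z" using DERIV_unique[OF \<open>DERIV f z :> l\<close> assms(3)[OF \<open>a < z\<close> \<open>z < b\<close>]] .
  ultimately show ?thesis by blast
qed

lemma nonint:
  fixes x k :: int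
  assumes "real_of_int x < t" "t < real_of_int x + 1"
  shows "t \<noteq> real_of_int k"
proof
  assume "t = real_of_int k"
  with assms have "x < k" "k < x + 1" by linarith+
  then show False by simp
qed

lemma step_diff:
  fixes x d L :: int
  assumes "1 < \<alpha>" "\<alpha> < 2" "d \<noteq> 0" "- L \<le> x" "x + 1 \<le> L"
  defines "G \<equiv> \<lambda>t. ps \<alpha> (t + real_of_int d) - ps \<alpha> t"
  shows "(if d > 0 then 1 else -1) * (G (real_of_int x + 1) - G (real_of_int x))
          \<ge> \<alpha> * (\<alpha> - 1) * (real_of_int L + real_of_int \<bar>d\<bar>) powr (\<alpha> - 2) * real_of_int \<bar>d\<bar>"
proof -
  have cont: "continuous_on {real_of_int x .. real_of_int x + 1} G"
    unfolding G_def using assms(1) by (intro continuous_intros continuous_on_compose2[OF ps_cont] ps_cont) auto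
  have der: "DERIV G t :> \<alpha> * ph \<alpha> (t + d) - \<alpha> * ph \<alpha> t"
    if "real_of_int x < t" "t < real_of_int x + 1" for t
  proof -
    have t0: "t \<noteq> 0" using nonint[OF that, of 0] by simp
    have t1: "t + d \<noteq> 0" using nonint[OF that, of "-d"] by auto
    have "DERIV (\<lambda>t. ps \<alpha> (t + d)) t :> \<alpha> * ph \<alpha> (t + d)"
      using DERIV_shift[of "ps \<alpha>" "\<alpha> * ph \<alpha> (t+d)" t "real_of_int d"] ps_deriv[OF t1] by simp
    then show ?thesis unfolding G_def using ps_deriv[OF t0] by (auto intro!: derivative_eq_intros)
  qed
  obtain \<xi> where xi: "real_of_int x < \<xi>" "\<xi> < real_of_int x + 1"
    "G (real_of_int x + 1) - G (real_of_int x) = \<alpha> * ph \<alpha> (\<xi> + d) - \<alpha> * ph \<alpha> \<xi>"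
    using mvt_step[OF _ cont der] by force
  have t0: "\<xi> \<noteq> 0" using nonint[OF xi(1,2), of 0] by simp
  have t1: "\<xi> + d \<noteq> 0" using nonint[OF xi(1,2), of "-d"] by auto
  have b1: "\<bar>\<xi>\<bar> \<le> real_of_int L + real_of_int \<bar>d\<bar>" using xi assms by (simp add: abs_le_iff) linarith
  have b2: "\<bar>\<xi> + d\<bar> \<le> real_of_int L + real_of_int \<bar>d\<bar>" using xi assms by (simp add: abs_le_iff) linarith
  show ?thesis
  proof (cases "d > 0")
    case True
    have "ph \<alpha> (\<xi> + d) - ph \<alpha> \<xi> \<ge> (\<alpha> - 1) * (real_of_int L + real_of_int \<bar>d\<bar>) powr (\<alpha> - 2) * ((\<xi> + d) - \<xi>)"
      using True by (intro phi_ineq assms t0 t1 b1 b2) auto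
    then have "\<alpha> * (ph \<alpha> (\<xi> + d) - ph \<alpha> \<xi>) \<ge> \<alpha> * ((\<alpha> - 1) * (real_of_int L + real_of_int \<bar>d\<bar>) powr (\<alpha> - 2) * d)"
      using assms by (intro mult_left_mono) auto
    then show ?thesis using True xi(3) by (simp add: algebra_simps)
  next
    case False
    then have dn: "d < 0" using assms by simp
    have "ph \<alpha> \<xi> - ph \<alpha> (\<xi> + d) \<ge> (\<alpha> - 1) * (real_of_int L + real_of_int \<bar>d\<bar>) powr (\<alpha> - 2) * (\<xi> - (\<xi> + d))"
      using dn by (intro phi_ineq assms t0 t1 b1 b2) auto
    then have "\<alpha> * (ph \<alpha> \<xi> - ph \<alpha> (\<xi> + d)) \<ge> \<alpha> * ((\<alpha> - 1) * (real_of_int L + real_of_int \<bar>d\<bar>) powr (\<alpha> - 2) * (- d))"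
      using assms by (intro mult_left_mono) auto
    then show ?thesis using dn xi(3) by (simp add: algebra_simps)
  qed
qed

lemma ph_mono:
  assumes "1 < \<alpha>" "\<alpha> < 2" "a \<le> b" "a \<noteq> 0" "b \<noteq> 0"
  shows "ph \<alpha> a \<le> ph \<alpha> b"
proof (cases "a = b")
  case False
  then have "a < b" using assms by simp
  have "(\<alpha> - 1) * (max \<bar>a\<bar> \<bar>b\<bar>) powr (\<alpha> - 2) * (b - a) \<le> ph \<alpha> b - ph \<alpha> a"
    by (rule phi_ineq) (use assms \<open>a < b\<close> in auto)
  moreover have "0 \<le> (\<alpha> - 1) * (max \<bar>a\<bar> \<bar>b\<bar>) powr (\<alpha> - 2) * (b - a)"
    using assms \<open>a < b\<close> by simp
  ultimately show ?thesis by simp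
qed simp

lemma phi2:
  assumes "1 < \<alpha>" "\<alpha> < 2" "a < b" "a \<noteq> 0" "b \<noteq> 0" "\<bar>b\<bar> \<le> N" "b - a \<ge> U" "0 < U" "U \<le> N"
  shows "ph \<alpha> b - ph \<alpha> a \<ge> (\<alpha> - 1) * (2 * N) powr (\<alpha> - 2) * U"
proof (cases "a \<ge> - 2 * N")
  case True
  have "ph \<alpha> b - ph \<alpha> a \<ge> (\<alpha> - 1) * (2 * N) powr (\<alpha> - 2) * (b - a)"
    by (rule phi_ineq) (use assms True in auto)
  moreover have "(\<alpha> - 1) * (2 * N) powr (\<alpha> - 2) * U \<le> (\<alpha> - 1) * (2 * N) powr (\<alpha> - 2) * (b - a)"
    using assms by (intro mult_left_mono) auto
  ultimately show ?thesis by linarith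
next
  case False
  have N0: "N > 0" using assms by simp
  have "ph \<alpha> (-N) \<le> ph \<alpha> b" by (rule ph_mono) (use assms N0 in auto)
  moreover have "ph \<alpha> a \<le> ph \<alpha> (-2*N)" by (rule ph_mono) (use assms N0 False in auto)
  moreover have "ph \<alpha> (-N) - ph \<alpha> (-2*N) \<ge> (\<alpha> - 1) * (2 * N) powr (\<alpha> - 2) * (-N - (-2*N))"
    by (rule phi_ineq) (use assms N0 in auto)
  moreover have "(\<alpha> - 1) * (2 * N) powr (\<alpha> - 2) * U \<le> (\<alpha> - 1) * (2 * N) powr (\<alpha> - 2) * N"
    using assms by (intro mult_left_mono) auto
  ultimately show ?thesis by simp
qed

lemma step_sum:
  fixes x s N U :: int
  assumes "1 < \<alpha>" "\<alpha> < 2" "0 < U" "U \<le> N" "- N \<le> x" "x + 1 \<le> N" "s + U \<le> 2 * x"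
  defines "Q \<equiv> \<lambda>t. ps \<alpha> t + ps \<alpha> (real_of_int s - t)"
  shows "Q (real_of_int x + 1) - Q (real_of_int x) \<ge> \<alpha> * (\<alpha> - 1) * (2 * real_of_int N) powr (\<alpha> - 2) * real_of_int U"
proof -
  have cont: "continuous_on {real_of_int x .. real_of_int x + 1} Q"
    unfolding Q_def using assms(1) by (intro continuous_intros continuous_on_compose2[OF ps_cont] ps_cont) auto
  have der: "DERIV Q t :> \<alpha> * ph \<alpha> t - \<alpha> * ph \<alpha> (real_of_int s - t)"
    if "real_of_int x < t" "t < real_of_int x + 1" for t :: real
  proof -
    have t0: "t \<noteq> 0" using nonint[OF that, of 0] by simp
    have t1: "real_of_int s - t \<noteq> 0" using nonint[OF that, of "s"] by auto
    have "DERIV (\<lambda>t. ps \<alpha> (real_of_int s - t)) t :> \<alpha> * ph \<alpha> (real_of_int s - t) * (-1)"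
      by (rule DERIV_chain2[of "ps \<alpha>" _ "\<lambda>t::real. real_of_int s - t"]) (use ps_deriv[OF t1] in \<open>auto intro!: derivative_eq_intros\<close>)
    then show ?thesis unfolding Q_def using ps_deriv[OF t0] by (auto intro!: derivative_eq_intros)
  qed
  obtain \<xi> :: real where xi: "real_of_int x < \<xi>" "\<xi> < real_of_int x + 1"
    "Q (real_of_int x + 1) - Q (real_of_int x) = \<alpha> * ph \<alpha> \<xi> - \<alpha> * ph \<alpha> (real_of_int s - \<xi>)"
    using mvt_step[OF _ cont der] by force
  have t0: "\<xi> \<noteq> 0" using nonint[OF xi(1,2), of 0] by simp
  have t1: "real_of_int s - \<xi> \<noteq> 0" using nonint[OF xi(1,2), of "s"] by auto
  have "ph \<alpha> \<xi> - ph \<alpha> (real_of_int s - \<xi>) \<ge> (\<alpha> - 1) * (2 * real_of_int N) powr (\<alpha> - 2) * real_of_int U"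
  proof (rule phi2)
    show "real_of_int s - \<xi> < \<xi>" "\<xi> - (real_of_int s - \<xi>) \<ge> real_of_int U" using xi assms by linarith+
    show "\<bar>\<xi>\<bar> \<le> real_of_int N" using xi assms by (simp add: abs_le_iff)
  qed (use assms t0 t1 in auto)
  then have "\<alpha> * (ph \<alpha> \<xi> - ph \<alpha> (real_of_int s - \<xi>)) \<ge> \<alpha> * ((\<alpha> - 1) * (2 * real_of_int N) powr (\<alpha> - 2) * real_of_int U)"
    using assms by (intro mult_left_mono) auto
  then show ?thesis using xi(3) by (simp add: algebra_simps)
qed



lemma incr_chain:
  fixes f :: "int \<Rightarrow> real"
  assumes "\<And>x. lo \<le> x \<Longrightarrow> x + 1 \<le> hi \<Longrightarrow> f (x + 1) - f x \<ge> \<kappa>"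
  shows "lo \<le> x \<Longrightarrow> x + int n \<le> hi \<Longrightarrow> f (x + int n) - f x \<ge> \<kappa> * n"
proof (induction n)
  case 0
  then show ?case by simp
next
  case (Suc n)
  then have "f (x + int n) - f x \<ge> \<kappa> * n" by simp
  moreover have "f (x + int n + 1) - f (x + int n) \<ge> \<kappa>" using Suc.prems by (intro assms) auto
  ultimately show ?case by (simp add: algebra_simps)
qed

lemma count_incr:
  fixes f :: "int \<Rightarrow> real"
  assumes "\<kappa> > 0" "w \<ge> 0" "\<And>x. lo \<le> x \<Longrightarrow> x + 1 \<le> hi \<Longrightarrow> f (x + 1) - f x \<ge> \<kappa>"
  shows "real (card {x. lo \<le> x \<and> x \<le> hi \<and> \<bar>f x - c\<bar> \<le> w}) \<le> 2 * w / \<kappa> + 1"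
proof -
  define X where "X = {x. lo \<le> x \<and> x \<le> hi \<and> \<bar>f x - c\<bar> \<le> w}"
  have fin: "finite X" unfolding X_def by (rule finite_subset[of _ "{lo..hi}"]) auto
  show ?thesis
  proof (cases "X = {}")
    case True
    then show ?thesis unfolding X_def[symmetric] using assms by simp
  next
    case False
    define a where "a = Min X"
    define b where "b = Max X"
    have aX: "a \<in> X" and bX: "b \<in> X" unfolding a_def b_def using fin False by auto
    have ab: "a \<le> b" unfolding a_def b_def using fin False by auto
    have sub: "X \<subseteq> {a..b}" unfolding a_def b_def using fin by auto
    have "f (a + int (nat (b - a))) - f a \<ge> \<kappa> * nat (b - a)"
      by (rule incr_chain[where f=f and lo=lo and hi=hi and \<kappa>=\<kappa>, OF assms(3)]) (use aX bX ab in \<open>auto simp: X_def\<close>)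
    then have "f b - f a \<ge> \<kappa> * (b - a)" using ab by simp
    moreover have "f b - f a \<le> 2 * w" using aX bX unfolding X_def by auto
    ultimately have "\<kappa> * (b - a) \<le> 2 * w" by linarith
    then have "real_of_int (b - a) \<le> 2 * w / \<kappa>" using assms(1) by (simp add: field_simps)
    moreover have "card X \<le> card {a..b}" using sub by (intro card_mono) auto
    then have "real (card X) \<le> real_of_int (b - a) + 1" using ab by simp
    ultimately show ?thesis unfolding X_def by linarith
  qed
qed

lemma diff1:
  fixes d L :: int
  assumes "1 < \<alpha>" "\<alpha> < 2" "C0 \<ge> 0" "d \<noteq> 0" "L \<ge> 0"
  shows "real (card {y::int. \<bar>y\<bar> \<le> L \<and> \<bar>ps \<alpha> (real_of_int y + real_of_int d) - ps \<alpha> (real_of_int y) - c\<bar> \<le> C0})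
     \<le> 2 * C0 / (\<alpha> * (\<alpha> - 1) * (real_of_int L + real_of_int \<bar>d\<bar>) powr (\<alpha> - 2) * real_of_int \<bar>d\<bar>) + 1"
proof -
  define \<sigma> :: real where "\<sigma> = (if d > 0 then 1 else -1)"
  define f where "f = (\<lambda>y::int. \<sigma> * (ps \<alpha> (real_of_int y + real_of_int d) - ps \<alpha> (real_of_int y)))"
  have "{y::int. \<bar>y\<bar> \<le> L \<and> \<bar>ps \<alpha> (real_of_int y + real_of_int d) - ps \<alpha> (real_of_int y) - c\<bar> \<le> C0}
      = {y. -L \<le> y \<and> y \<le> L \<and> \<bar>f y - \<sigma> * c\<bar> \<le> C0}"
  proof -
    have "\<bar>f y - \<sigma> * c\<bar> = \<bar>ps \<alpha> (real_of_int y + real_of_int d) - ps \<alpha> (real_of_int y) - c\<bar>" for y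
      unfolding f_def \<sigma>_def by (auto simp: abs_if algebra_simps)
    then show ?thesis by auto
  qed
  also have "real (card \<dots>) \<le> 2 * C0 / (\<alpha> * (\<alpha> - 1) * (real_of_int L + real_of_int \<bar>d\<bar>) powr (\<alpha> - 2) * real_of_int \<bar>d\<bar>) + 1"
  proof (rule count_incr)
    show "0 < \<alpha> * (\<alpha> - 1) * (real_of_int L + real_of_int \<bar>d\<bar>) powr (\<alpha> - 2) * real_of_int \<bar>d\<bar>"
      using assms by auto
    fix x assume "- L \<le> x" "x + 1 \<le> L"
    from step_diff[OF assms(1,2,4) this] show "\<alpha> * (\<alpha> - 1) * (real_of_int L + real_of_int \<bar>d\<bar>) powr (\<alpha> - 2) * real_of_int \<bar>d\<bar> \<le> f (x + 1) - f x"
      unfolding f_def \<sigma>_def by (simp add: algebra_simps)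
  qed (use assms in auto)
  finally show ?thesis .
qed

lemma harm_le_ln: "n \<ge> 1 \<Longrightarrow> (harm n :: real) \<le> 1 + ln (real n)"
proof -
  assume "n \<ge> 1"
  then obtain k where k: "n = Suc k" by (cases n) auto
  have "harm (Suc k) - ln (real (Suc k)) \<le> harm (Suc 0) - ln (real (Suc 0))"
    using decseq_harm_diff_ln unfolding decseq_def by (metis zero_le)
  then show ?thesis using k by (simp add: harm_expand)
qed

lemma harm_set:
  "finite A \<Longrightarrow> 0 \<notin> A \<Longrightarrow> card A \<le> n \<Longrightarrow> (\<Sum>j\<in>A. 1 / real j) \<le> harm n"
proof (induction n arbitrary: A)
  case 0
  then show ?case by (simp add: harm_expand)
next
  case (Suc n)
  show ?case
  proof (cases "card A \<le> n")
    case True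
    then have "(\<Sum>j\<in>A. 1 / real j) \<le> harm n" using Suc by blast
    also have "\<dots> \<le> harm (Suc n)" by (rule harm_mono) simp
    finally show ?thesis .
  next
    case False
    then have cA: "card A = Suc n" using Suc.prems by simp
    then have ne: "A \<noteq> {}" by auto
    define m where "m = Max A"
    have mA: "m \<in> A" unfolding m_def using Suc.prems ne by auto
    have "A \<subseteq> {1..m}" unfolding m_def using Suc.prems
      by (auto simp: Suc_le_eq intro: Max_ge) (metis gr0I)
    then have "card A \<le> m" using card_mono[of "{1..m}" A] by simp
    then have m1: "1 / real m \<le> 1 / real (Suc n)" using cA by (simp add: frac_le)
    have "(\<Sum>j\<in>A - {m}. 1 / real j) \<le> harm n"
      using Suc.prems cA mA by (intro Suc.IH) auto
    moreover have "(\<Sum>j\<in>A. 1 / real j) = 1 / real m + (\<Sum>j\<in>A - {m}. 1 / real j)"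
      using Suc.prems mA by (simp add: sum.remove)
    moreover have "harm (Suc n) = harm n + 1 / real (Suc n)" by (simp add: harm_Suc inverse_eq_divide)
    ultimately show ?thesis using m1 by linarith
  qed
qed

lemma recip_sum:
  fixes X :: "int set"
  assumes "finite X" "x0 \<notin> X" "card X \<le> n"
  shows "(\<Sum>x\<in>X. 1 / real_of_int \<bar>x - x0\<bar>) \<le> 2 * harm n"
proof -
  define g where "g = (\<lambda>x. nat \<bar>x - x0\<bar>)"
  have part: "(\<Sum>x\<in>Y. 1 / real_of_int \<bar>x - x0\<bar>) \<le> harm n"
    if Y: "Y \<subseteq> X" "inj_on g Y" for Y
  proof -
    have "(\<Sum>x\<in>Y. 1 / real_of_int \<bar>x - x0\<bar>) = (\<Sum>x\<in>Y. 1 / real (g x))"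
      unfolding g_def by (intro sum.cong) auto
    also have "\<dots> = (\<Sum>j\<in>g ` Y. 1 / real j)" using sum.reindex[OF Y(2), of "\<lambda>j. 1 / real j"] by simp
    also have "\<dots> \<le> harm n"
    proof (rule harm_set)
      show "finite (g ` Y)" using Y assms finite_subset by blast
      show "0 \<notin> g ` Y" using Y assms unfolding g_def by auto
      have "card (g ` Y) \<le> card Y" by (rule card_image_le) (use Y assms finite_subset in blast)
      also have "\<dots> \<le> card X" using Y assms by (intro card_mono) auto
      finally show "card (g ` Y) \<le> n" using assms by simp
    qed
    finally show ?thesis .
  qed
  define Xp where "Xp = {x\<in>X. x > x0}"
  define Xm where "Xm = {x\<in>X. x < x0}"
  have X: "X = Xp \<union> Xm" "Xp \<inter> Xm = {}" unfolding Xp_def Xm_def using assms by (auto, smt (verit))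
  have "(\<Sum>x\<in>X. 1 / real_of_int \<bar>x - x0\<bar>) = (\<Sum>x\<in>Xp. 1 / real_of_int \<bar>x - x0\<bar>) + (\<Sum>x\<in>Xm. 1 / real_of_int \<bar>x - x0\<bar>)"
    using assms by (subst X(1), intro sum.union_disjoint) (auto simp: Xp_def Xm_def)
  also have "\<dots> \<le> harm n + harm n"
  proof (intro add_mono part)
    show "inj_on g Xp" unfolding g_def Xp_def by (auto simp: inj_on_def)
    show "inj_on g Xm" unfolding g_def Xm_def by (auto simp: inj_on_def)
  qed (auto simp: Xp_def Xm_def)
  finally show ?thesis by simp
qed

lemma powsub:
  fixes u v p :: real
  assumes "0 \<le> u" "0 \<le> v" "0 \<le> p" "p \<le> 1"
  shows "(u + v) powr p \<le> 2 * (u powr p + v powr p)"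
proof -
  have key: "(x + y) powr p \<le> 2 * y powr p" if "0 \<le> x" "x \<le> y" for x y :: real
  proof -
    have "(x + y) powr p \<le> (2 * y) powr p" using that assms by (intro powr_mono2) auto
    also have "\<dots> = 2 powr p * y powr p" using that by (simp add: powr_mult)
    also have "2 powr p \<le> 2 powr 1" using assms by (intro powr_mono) auto
    then have "2 powr p * y powr p \<le> 2 * y powr p" by (intro mult_right_mono) auto
    finally show ?thesis .
  qed
  show ?thesis
  proof (cases "u \<le> v")
    case True
    then have "(u + v) powr p \<le> 2 * v powr p" using key[of u v] assms by simp
    moreover have "0 \<le> u powr p" by simp
    ultimately show ?thesis by (smt (verit))
  next
    case False
    then have "(u + v) powr p \<le> 2 * u powr p" using key[of v u] assms by (simp add: add.commute)
    moreover have "0 \<le> v powr p" by simp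
    ultimately show ?thesis by (smt (verit))
  qed
qed

lemma term_bound:
  fixes D L :: real
  assumes "1 < \<alpha>" "\<alpha> < 2" "C0 \<ge> 0" "D \<ge> 1" "L \<ge> 0"
  shows "2 * C0 / (\<alpha> * (\<alpha> - 1) * (L + D) powr (\<alpha> - 2) * D) + 1
     \<le> 1 + 2 * (2 * C0 / (\<alpha> * (\<alpha> - 1))) + 2 * (2 * C0 / (\<alpha> * (\<alpha> - 1))) * L powr (2 - \<alpha>) / D"
proof -
  define K where "K = 2 * C0 / (\<alpha> * (\<alpha> - 1))"
  have K0: "K \<ge> 0" unfolding K_def using assms by auto
  have LD: "L + D > 0" using assms by simp
  have "(L + D) powr (\<alpha> - 2) = inverse ((L + D) powr (2 - \<alpha>))"
    using LD by (simp add: powr_minus[symmetric])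
  then have eq: "2 * C0 / (\<alpha> * (\<alpha> - 1) * (L + D) powr (\<alpha> - 2) * D) = K * (L + D) powr (2 - \<alpha>) / D"
    unfolding K_def using assms by (simp add: field_simps)
  have "(L + D) powr (2 - \<alpha>) \<le> 2 * (L powr (2 - \<alpha>) + D powr (2 - \<alpha>))"
    using assms by (intro powsub) auto
  moreover have "D powr (2 - \<alpha>) \<le> D powr 1" using assms by (intro powr_mono) auto
  ultimately have "(L + D) powr (2 - \<alpha>) \<le> 2 * L powr (2 - \<alpha>) + 2 * D" using assms by simp
  then have "K * (L + D) powr (2 - \<alpha>) / D \<le> K * (2 * L powr (2 - \<alpha>) + 2 * D) / D"
    using K0 assms by (intro divide_right_mono mult_left_mono) auto
  also have "\<dots> = 2 * K + 2 * K * L powr (2 - \<alpha>) / D" using assms by (simp add: field_simps)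
  finally show ?thesis using eq unfolding K_def by simp
qed

lemma log_bound:
  fixes M :: nat and n :: nat
  assumes "M \<ge> 1" "n \<ge> 1" "n \<le> 5 * M"
  shows "1 + ln (real n) \<le> 4 * ln (2 + real M)"
proof -
  have l3: "1 \<le> ln (3::real)" using exp_le by (subst ln_ge_iff) auto
  have "ln (real n) \<le> ln (5 * real M)" using assms by (intro ln_mono) auto
  also have "\<dots> = ln 5 + ln (real M)" using assms by (simp add: ln_mult)
  also have "ln (5::real) \<le> ln 9" by simp
  also have "ln (9::real) = 2 * ln 3" using ln_realpow[of 3 2] by simp
  finally have a: "ln (real n) \<le> 2 * ln 3 + ln (real M)" by simp
  have b: "ln (3::real) \<le> ln (2 + real M)" using assms by (intro ln_mono) auto
  have c: "ln (real M) \<le> ln (2 + real M)" using assms by (intro ln_mono) auto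
  show ?thesis using a b c l3 by linarith
qed

lemma diff_count:
  fixes a b x0 :: int and L M :: nat and D :: "int \<Rightarrow> int" and c :: "int \<Rightarrow> real"
  assumes "1 < \<alpha>" "\<alpha> < 2" "C0 \<ge> 0" "M \<ge> 1" "b - a + 1 \<le> 5 * int M" "\<And>x. \<bar>D x\<bar> = \<bar>x - x0\<bar>"
  shows "real (card {(x,y). a \<le> x \<and> x \<le> b \<and> x \<noteq> x0 \<and> \<bar>y\<bar> \<le> int L \<and>
            \<bar>ps \<alpha> (real_of_int y + real_of_int (D x)) - ps \<alpha> (real_of_int y) - c x\<bar> \<le> C0})
     \<le> (5 + 26 * (2 * C0 / (\<alpha> * (\<alpha> - 1)))) * (real L powr (2 - \<alpha>) * ln (2 + real M) + real M)"
proof -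
  define K where "K = 2 * C0 / (\<alpha> * (\<alpha> - 1))"
  have K0: "K \<ge> 0" unfolding K_def using assms by auto
  define I where "I = {a..b} - {x0}"
  define Y where "Y = (\<lambda>x. {y. \<bar>y\<bar> \<le> int L \<and>
            \<bar>ps \<alpha> (real_of_int y + real_of_int (D x)) - ps \<alpha> (real_of_int y) - c x\<bar> \<le> C0})"
  have finY: "finite (Y x)" for x unfolding Y_def by (rule finite_subset[of _ "{-int L..int L}"]) auto
  have set_eq: "{(x,y). a \<le> x \<and> x \<le> b \<and> x \<noteq> x0 \<and> \<bar>y\<bar> \<le> int L \<and>
            \<bar>ps \<alpha> (real_of_int y + real_of_int (D x)) - ps \<alpha> (real_of_int y) - c x\<bar> \<le> C0} = Sigma I Y"
    unfolding I_def Y_def by auto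
  have Lp: "real L powr (2 - \<alpha>) * ln (2 + real M) \<ge> 0" by simp
  have RHS0: "0 \<le> (5 + 26 * K) * (real L powr (2 - \<alpha>) * ln (2 + real M) + real M)"
    using K0 Lp by simp
  show ?thesis
  proof (cases "b < a")
    case True
    then have "I = {}" unfolding I_def by auto
    then show ?thesis unfolding set_eq using RHS0 K_def by simp
  next
    case False
    define n where "n = nat (b - a + 1)"
    have n1: "n \<ge> 1" "n \<le> 5 * M" unfolding n_def using False assms by auto
    have finI: "finite I" unfolding I_def by simp
    have cI: "card I \<le> n" unfolding I_def n_def
      by (metis card_Diff1_le card_atLeastAtMost_int finite_atLeastAtMost_int order_trans)
    have x0I: "x0 \<notin> I" unfolding I_def by simp
    have each: "real (card (Y x)) \<le> 1 + 2 * K + 2 * K * real L powr (2 - \<alpha>) / real_of_int \<bar>x - x0\<bar>"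
      if "x \<in> I" for x
    proof -
      have dne: "D x \<noteq> 0" using that assms(6)[of x] unfolding I_def by auto
      have "real (card (Y x)) \<le> 2 * C0 / (\<alpha> * (\<alpha> - 1) * (real_of_int (int L) + real_of_int \<bar>D x\<bar>) powr (\<alpha> - 2) * real_of_int \<bar>D x\<bar>) + 1"
        unfolding Y_def by (rule diff1) (use assms dne in auto)
      also have "\<dots> \<le> 1 + 2 * K + 2 * K * real L powr (2 - \<alpha>) / real_of_int \<bar>D x\<bar>"
      proof -
        have "real_of_int \<bar>D x\<bar> \<ge> 1" using dne by linarith
        then show ?thesis unfolding K_def using term_bound[of \<alpha> C0 "real_of_int \<bar>D x\<bar>" "real L"] assms by simp
      qed
      finally show ?thesis using assms(6)[of x] by simp
    qed
    have "real (card (Sigma I Y)) = (\<Sum>x\<in>I. real (card (Y x)))"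
      using finI finY by simp
    also have "\<dots> \<le> (\<Sum>x\<in>I. (1 + 2 * K) + 2 * K * real L powr (2 - \<alpha>) * (1 / real_of_int \<bar>x - x0\<bar>))"
      using each by (intro sum_mono) (simp add: algebra_simps)
    also have "\<dots> = real (card I) * (1 + 2 * K) + 2 * K * real L powr (2 - \<alpha>) * (\<Sum>x\<in>I. 1 / real_of_int \<bar>x - x0\<bar>)"
      by (simp add: sum.distrib sum_distrib_left)
    also have "\<dots> \<le> real n * (1 + 2 * K) + 2 * K * real L powr (2 - \<alpha>) * (2 * harm n)"
      using cI K0 recip_sum[OF finI x0I cI] by (intro add_mono mult_right_mono mult_left_mono) auto
    also have "\<dots> \<le> real (5 * M) * (1 + 2 * K) + 2 * K * real L powr (2 - \<alpha>) * (2 * (4 * ln (2 + real M)))"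
    proof -
      have "harm n \<le> 4 * ln (2 + real M)" using harm_le_ln[OF n1(1)] log_bound[OF assms(4) n1] by linarith
      then show ?thesis using n1 K0 by (intro add_mono mult_right_mono mult_left_mono) auto
    qed
    also have "\<dots> \<le> (5 + 26 * K) * (real L powr (2 - \<alpha>) * ln (2 + real M) + real M)"
    proof -
      have "real (5 * M) * (1 + 2 * K) \<le> (5 + 26 * K) * real M" using K0 by (simp add: algebra_simps)
      moreover have "2 * K * real L powr (2 - \<alpha>) * (2 * (4 * ln (2 + real M))) \<le> (5 + 26 * K) * (real L powr (2 - \<alpha>) * ln (2 + real M))"
        using K0 Lp by (simp add: algebra_simps mult_right_mono)
      ultimately show ?thesis by (simp add: algebra_simps)
    qed
    finally show ?thesis unfolding set_eq K_def .
  qed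
qed



lemma ps_even: "ps a (- t) = ps a t" by (simp add: ps_def)

lemma sumR:
  fixes s N U :: int
  assumes "1 < \<alpha>" "\<alpha> < 2" "C0 \<ge> 0" "0 < U" "U \<le> N"
  shows "real (card {y::int. \<bar>y\<bar> \<le> N \<and> 2 * y - s \<ge> U \<and>
            \<bar>ps \<alpha> (real_of_int y) + ps \<alpha> (real_of_int s - real_of_int y) - c\<bar> \<le> C0})
     \<le> 2 * C0 / (\<alpha> * (\<alpha> - 1) * (2 * real_of_int N) powr (\<alpha> - 2) * real_of_int U) + 1"
proof -
  define lo where "lo = max (-N) ((s + U + 1) div 2)"
  define f where "f = (\<lambda>y::int. ps \<alpha> (real_of_int y) + ps \<alpha> (real_of_int s - real_of_int y))"
  have "{y::int. \<bar>y\<bar> \<le> N \<and> 2 * y - s \<ge> U \<and>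
            \<bar>ps \<alpha> (real_of_int y) + ps \<alpha> (real_of_int s - real_of_int y) - c\<bar> \<le> C0}
       = {y. lo \<le> y \<and> y \<le> N \<and> \<bar>f y - c\<bar> \<le> C0}"
  proof -
    have "(lo \<le> y \<and> y \<le> N) \<longleftrightarrow> (\<bar>y\<bar> \<le> N \<and> 2 * y - s \<ge> U)" for y
      unfolding lo_def using assms by (simp add: abs_le_iff) presburger
    then show ?thesis unfolding f_def by blast
  qed
  also have "real (card \<dots>) \<le> 2 * C0 / (\<alpha> * (\<alpha> - 1) * (2 * real_of_int N) powr (\<alpha> - 2) * real_of_int U) + 1"
  proof (rule count_incr)
    show "0 < \<alpha> * (\<alpha> - 1) * (2 * real_of_int N) powr (\<alpha> - 2) * real_of_int U"
      using assms by auto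
    fix x assume x: "lo \<le> x" "x + 1 \<le> N"
    have "- N \<le> x" using x unfolding lo_def by simp
    have "(s + U + 1) div 2 \<le> x" using x unfolding lo_def by simp
    then have "s + U \<le> 2 * x" by presburger
    from step_sum[OF assms(1,2,4,5) \<open>- N \<le> x\<close> x(2) this]
    show "\<alpha> * (\<alpha> - 1) * (2 * real_of_int N) powr (\<alpha> - 2) * real_of_int U \<le> f (x + 1) - f x"
      unfolding f_def by (simp add: algebra_simps)
  qed (use assms in auto)
  finally show ?thesis .
qed

lemma sum_count:
  fixes s N U :: int
  assumes "1 < \<alpha>" "\<alpha> < 2" "C0 \<ge> 0" "0 < U" "U \<le> N"
  shows "real (card {y::int. \<bar>y\<bar> \<le> N \<and> \<bar>2 * y - s\<bar> \<ge> U \<and>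
            \<bar>ps \<alpha> (real_of_int y) + ps \<alpha> (real_of_int s - real_of_int y) - c\<bar> \<le> C0})
     \<le> 2 * (2 * C0 / (\<alpha> * (\<alpha> - 1) * (2 * real_of_int N) powr (\<alpha> - 2) * real_of_int U) + 1)"
proof -
  define R where "R = (\<lambda>s. {y::int. \<bar>y\<bar> \<le> N \<and> 2 * y - s \<ge> U \<and>
            \<bar>ps \<alpha> (real_of_int y) + ps \<alpha> (real_of_int s - real_of_int y) - c\<bar> \<le> C0})"
  define Lf where "Lf = {y::int. \<bar>y\<bar> \<le> N \<and> 2 * y - s \<le> - U \<and>
            \<bar>ps \<alpha> (real_of_int y) + ps \<alpha> (real_of_int s - real_of_int y) - c\<bar> \<le> C0}"
  have eq1: "{y::int. \<bar>y\<bar> \<le> N \<and> \<bar>2 * y - s\<bar> \<ge> U \<and>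
            \<bar>ps \<alpha> (real_of_int y) + ps \<alpha> (real_of_int s - real_of_int y) - c\<bar> \<le> C0} = R s \<union> Lf"
    unfolding R_def Lf_def by auto
  have eq2: "Lf = uminus ` R (-s)"
  proof -
    have that: "ps \<alpha> (real_of_int y) + ps \<alpha> (real_of_int s - real_of_int y) = ps \<alpha> (real_of_int (-y)) + ps \<alpha> (real_of_int (-s) - real_of_int (-y))" for y
      using ps_even[of \<alpha> "real_of_int y"] ps_even[of \<alpha> "real_of_int s - real_of_int y"] by (simp add: algebra_simps)
    show ?thesis
    proof (rule set_eqI)
      fix y
      show "y \<in> Lf \<longleftrightarrow> y \<in> uminus ` R (-s)"
      proof
        assume "y \<in> Lf"
        then have "-y \<in> R (-s)" unfolding Lf_def R_def using that[of y] by simp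
        then show "y \<in> uminus ` R (-s)" by (metis image_eqI minus_minus)
      next
        assume "y \<in> uminus ` R (-s)"
        then obtain z where "z \<in> R (-s)" "y = -z" by blast
        then show "y \<in> Lf" unfolding Lf_def R_def using that[of y] by simp
      qed
    qed
  qed
  have finR: "finite (R t)" for t unfolding R_def by (rule finite_subset[of _ "{-N..N}"]) auto
  have "card (R s \<union> Lf) \<le> card (R s) + card Lf" by (rule card_Un_le)
  also have "card Lf \<le> card (R (-s))" unfolding eq2 by (rule card_image_le[OF finR])
  finally have "real (card (R s \<union> Lf)) \<le> real (card (R s)) + real (card (R (-s)))" by linarith
  also have "\<dots> \<le> 2 * (2 * C0 / (\<alpha> * (\<alpha> - 1) * (2 * real_of_int N) powr (\<alpha> - 2) * real_of_int U) + 1)"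
    using sumR[OF assms, of s c] sumR[OF assms, of "-s" c] unfolding R_def by simp
  finally show ?thesis unfolding eq1 .
qed



lemma fin_pairs:
  "finite {(x::int,y::int). a \<le> x \<and> x \<le> b \<and> P x \<and> \<bar>y\<bar> \<le> L \<and> Q x y}"
  by (rule finite_subset[of _ "{a..b} \<times> {-L..L}"]) auto

lemma kappa_bound:
  fixes B2 B3 :: nat
  assumes "1 < \<alpha>" "\<alpha> < 2" "C0 \<ge> 0" "B2 \<ge> 1" "B3 \<ge> 1"
  shows "(2 * real B3 + 1) * (2 * (2 * C0 / (\<alpha> * (\<alpha> - 1) * (2 * real B2) powr (\<alpha> - 2) * real B3) + 1))
    \<le> 12 * (2 * C0 / (\<alpha> * (\<alpha> - 1))) * real B2 powr (2 - \<alpha>) + 6 * real B3"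
proof -
  define K where "K = 2 * C0 / (\<alpha> * (\<alpha> - 1))"
  have K0: "K \<ge> 0" unfolding K_def using assms by auto
  have "(2 * real B2) powr (\<alpha> - 2) = inverse ((2 * real B2) powr (2 - \<alpha>))"
    using assms by (simp add: powr_minus[symmetric])
  then have eq: "2 * C0 / (\<alpha> * (\<alpha> - 1) * (2 * real B2) powr (\<alpha> - 2) * real B3) = K * (2 * real B2) powr (2 - \<alpha>) / real B3"
    unfolding K_def using assms by (simp add: field_simps)
  have "(2 * real B2) powr (2 - \<alpha>) = 2 powr (2 - \<alpha>) * real B2 powr (2 - \<alpha>)" by (simp add: powr_mult)
  moreover have "2 powr (2 - \<alpha>) \<le> 2 powr 1" using assms by (intro powr_mono) auto
  ultimately have p2: "(2 * real B2) powr (2 - \<alpha>) \<le> 2 * real B2 powr (2 - \<alpha>)"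
    by (simp add: mult_right_mono)
  have le1: "K * (2 * real B2) powr (2 - \<alpha>) / real B3 \<le> K * (2 * real B2 powr (2 - \<alpha>)) / real B3"
    using K0 p2 assms by (intro divide_right_mono mult_left_mono) auto
  have t: "2 * C0 / (\<alpha> * (\<alpha> - 1) * (2 * real B2) powr (\<alpha> - 2) * real B3) \<le> 2 * K * real B2 powr (2 - \<alpha>) / real B3"
  proof -
    note eq
    also note le1
    also have "K * (2 * real B2 powr (2 - \<alpha>)) / real B3 = 2 * K * real B2 powr (2 - \<alpha>) / real B3" by (simp add: algebra_simps)
    finally show ?thesis .
  qed
  have nn: "0 \<le> 2 * K * real B2 powr (2 - \<alpha>) / real B3" using K0 by simp
  have "(2 * real B3 + 1) * (2 * (2 * C0 / (\<alpha> * (\<alpha> - 1) * (2 * real B2) powr (\<alpha> - 2) * real B3) + 1))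
     \<le> (3 * real B3) * (2 * (2 * K * real B2 powr (2 - \<alpha>) / real B3 + 1))"
    using t nn assms by (intro mult_mono) auto
  also have "\<dots> = 12 * K * real B2 powr (2 - \<alpha>) + 6 * real B3" using assms by (simp add: field_simps)
  finally show ?thesis unfolding K_def .
qed

lemma hard:
  fixes a0 :: int and B2 B3 :: nat and m :: real
  assumes "1 < \<alpha>" "\<alpha> < 2" "C0 \<ge> 0" "B2 \<ge> 1" "B3 \<ge> 1"
  shows "real (card {(y::int,z::int). \<bar>y\<bar> \<le> int B2 \<and> \<bar>z\<bar> \<le> int B3 \<and> y \<noteq> a0 \<and> y \<noteq> z \<and>
      \<bar>ps \<alpha> (real_of_int a0) - ps \<alpha> (real_of_int y) + ps \<alpha> (real_of_int z) - ps \<alpha> (real_of_int (a0 - y + z)) - m\<bar> \<le> C0})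
    \<le> (11 + 38 * (2 * C0 / (\<alpha> * (\<alpha> - 1)))) * (real B2 powr (2 - \<alpha>) * ln (2 + real B3) + real B3)"
  (is "real (card ?P) \<le> _")
proof -
  define K where "K = 2 * C0 / (\<alpha> * (\<alpha> - 1))"
  have K0: "K \<ge> 0" unfolding K_def using assms by auto
  define X where "X = real B2 powr (2 - \<alpha>) * ln (2 + real B3) + real B3"
  have ln1: "ln (2 + real B3) \<ge> 1"
  proof -
    have "1 \<le> ln (3::real)" using exp_le by (subst ln_ge_iff) auto
    also have "\<dots> \<le> ln (2 + real B3)" using assms by (intro ln_mono) auto
    finally show ?thesis .
  qed
  have X0: "X \<ge> 0" unfolding X_def using ln1 by simp
  have C1C2: "(5 + 26 * K) * X \<le> (11 + 38 * K) * X" using K0 X0 by (intro mult_right_mono) auto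
  show ?thesis
  proof (cases "B2 < B3")
    case True
    define T where "T = {(x::int,y::int). - (int B2 + int B3) \<le> x \<and> x \<le> int B2 + int B3 \<and> x \<noteq> 0 \<and> \<bar>y\<bar> \<le> int B2 \<and>
            \<bar>ps \<alpha> (real_of_int y + real_of_int ((\<lambda>x. x) x)) - ps \<alpha> (real_of_int y) - (m - ps \<alpha> (real_of_int a0) + ps \<alpha> (real_of_int (a0 + x)))\<bar> \<le> C0}"
    define g where "g = (\<lambda>(y::int,z::int). (z - y, y))"
    have "inj_on g ?P" unfolding g_def by (auto simp: inj_on_def)
    moreover have "g ` ?P \<subseteq> T"
    proof (rule image_subsetI)
      fix p assume "p \<in> ?P"
      then obtain y z where p: "p = (y, z)" and yz: "(y, z) \<in> ?P" by (cases p) auto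
      have e: "\<bar>ps \<alpha> (real_of_int y + real_of_int (z - y)) - ps \<alpha> (real_of_int y) - (m - ps \<alpha> (real_of_int a0) + ps \<alpha> (real_of_int (a0 + (z - y))))\<bar>
          = \<bar>ps \<alpha> (real_of_int a0) - ps \<alpha> (real_of_int y) + ps \<alpha> (real_of_int z) - ps \<alpha> (real_of_int (a0 - y + z)) - m\<bar>"
        by (simp add: algebra_simps)
      have "(z - y, y) \<in> T" unfolding T_def using yz e by auto
      then show "g p \<in> T" by (simp add: g_def p)
    qed
    moreover have "finite T" unfolding T_def by (rule fin_pairs)
    ultimately have "card ?P \<le> card T" by (rule card_inj_on_le)
    then have "real (card ?P) \<le> real (card T)" by simp
    also have "\<dots> \<le> (5 + 26 * K) * (real B2 powr (2 - \<alpha>) * ln (2 + real B3) + real B3)"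
      unfolding T_def K_def by (rule diff_count) (use assms True in auto)
    also have "\<dots> \<le> (11 + 38 * K) * X" using C1C2 unfolding X_def .
    finally show ?thesis unfolding K_def X_def .
  next
    case False
    then have B32: "B3 \<le> B2" by simp
    define P1 where "P1 = {p \<in> ?P. \<bar>2 * fst p - a0 - snd p\<bar> < int B3}"
    define P2 where "P2 = {p \<in> ?P. \<bar>2 * fst p - a0 - snd p\<bar> \<ge> int B3}"
    have PU: "?P = P1 \<union> P2" unfolding P1_def P2_def by auto
    define lo where "lo = (a0 - 2 * int B3) div 2"
    define T1 where "T1 = {(x::int,y::int). lo + 1 \<le> x \<and> x \<le> lo + 2 * int B3 \<and> x \<noteq> a0 \<and> \<bar>y\<bar> \<le> int B3 \<and>
            \<bar>ps \<alpha> (real_of_int y + real_of_int ((\<lambda>x. a0 - x) x)) - ps \<alpha> (real_of_int y) - (ps \<alpha> (real_of_int a0) - ps \<alpha> (real_of_int x) - m)\<bar> \<le> C0}"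
    have "P1 \<subseteq> T1"
    proof safe
      fix y z assume yz: "(y, z) \<in> P1"
      have e: "\<bar>ps \<alpha> (real_of_int z + real_of_int (a0 - y)) - ps \<alpha> (real_of_int z) - (ps \<alpha> (real_of_int a0) - ps \<alpha> (real_of_int y) - m)\<bar>
          = \<bar>ps \<alpha> (real_of_int a0) - ps \<alpha> (real_of_int y) + ps \<alpha> (real_of_int z) - ps \<alpha> (real_of_int (a0 - y + z)) - m\<bar>"
        by (simp add: algebra_simps abs_minus_commute)
      have r: "\<bar>2 * y - a0 - z\<bar> < int B3" "\<bar>z\<bar> \<le> int B3" using yz unfolding P1_def by auto
      have "lo + 1 \<le> y \<and> y \<le> lo + 2 * int B3" using r unfolding lo_def by (simp add: abs_less_iff abs_le_iff) presburger
      then show "(y, z) \<in> T1" using yz e unfolding P1_def T1_def by auto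
    qed
    moreover have "finite T1" unfolding T1_def by (rule fin_pairs)
    ultimately have c1: "real (card P1) \<le> real (card T1)" by (simp add: card_mono)
    also have "\<dots> \<le> (5 + 26 * K) * (real B3 powr (2 - \<alpha>) * ln (2 + real B3) + real B3)"
      unfolding T1_def K_def by (rule diff_count) (use assms in auto)
    also have "\<dots> \<le> (5 + 26 * K) * X"
    proof -
      have "real B3 powr (2 - \<alpha>) \<le> real B2 powr (2 - \<alpha>)" using B32 assms by (intro powr_mono2) auto
      then have "real B3 powr (2 - \<alpha>) * ln (2 + real B3) \<le> real B2 powr (2 - \<alpha>) * ln (2 + real B3)"
        using ln1 by (intro mult_right_mono) auto
      then show ?thesis unfolding X_def using K0 by (intro mult_left_mono) auto
    qed
    finally have b1: "real (card P1) \<le> (5 + 26 * K) * X" .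
    define W where "W = (\<lambda>z::int. {y::int. \<bar>y\<bar> \<le> int B2 \<and> \<bar>2 * y - (a0 + z)\<bar> \<ge> int B3 \<and>
            \<bar>ps \<alpha> (real_of_int y) + ps \<alpha> (real_of_int (a0 + z) - real_of_int y) - (ps \<alpha> (real_of_int a0) + ps \<alpha> (real_of_int z) - m)\<bar> \<le> C0})"
    have finW: "finite (W z)" for z unfolding W_def by (rule finite_subset[of _ "{-int B2..int B2}"]) auto
    have "inj_on (\<lambda>(y,z). (z,y)) P2" by (auto simp: inj_on_def)
    moreover have "(\<lambda>(y,z). (z,y)) ` P2 \<subseteq> Sigma {-int B3..int B3} W"
    proof safe
      fix y z assume yz: "(y, z) \<in> P2"
      have e: "\<bar>ps \<alpha> (real_of_int y) + ps \<alpha> (real_of_int (a0 + z) - real_of_int y) - (ps \<alpha> (real_of_int a0) + ps \<alpha> (real_of_int z) - m)\<bar>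
          = \<bar>ps \<alpha> (real_of_int a0) - ps \<alpha> (real_of_int y) + ps \<alpha> (real_of_int z) - ps \<alpha> (real_of_int (a0 - y + z)) - m\<bar>"
        by (simp add: algebra_simps abs_minus_commute)
      show "z \<in> {-int B3..int B3}" using yz unfolding P2_def by auto
      show "y \<in> W z" using yz e unfolding P2_def W_def by (auto simp: algebra_simps)
    qed
    moreover have "finite (Sigma {-int B3..int B3} W)" using finW by auto
    ultimately have "card P2 \<le> card (Sigma {-int B3..int B3} W)" by (rule card_inj_on_le)
    then have "card P2 \<le> (\<Sum>z\<in>{-int B3..int B3}. card (W z))" using finW by simp
    then have "real (card P2) \<le> (\<Sum>z\<in>{-int B3..int B3}. real (card (W z)))"
      by (metis of_nat_le_iff of_nat_sum)
    also have "\<dots> \<le> (\<Sum>z\<in>{-int B3..int B3}. 2 * (2 * C0 / (\<alpha> * (\<alpha> - 1) * (2 * real_of_int (int B2)) powr (\<alpha> - 2) * real_of_int (int B3)) + 1))"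
    proof (rule sum_mono)
      fix z
      show "real (card (W z)) \<le> 2 * (2 * C0 / (\<alpha> * (\<alpha> - 1) * (2 * real_of_int (int B2)) powr (\<alpha> - 2) * real_of_int (int B3)) + 1)"
        unfolding W_def by (rule sum_count) (use assms B32 in auto)
    qed
    also have "\<dots> = (2 * real B3 + 1) * (2 * (2 * C0 / (\<alpha> * (\<alpha> - 1) * (2 * real B2) powr (\<alpha> - 2) * real B3) + 1))"
      by simp
    also have "\<dots> \<le> 12 * K * real B2 powr (2 - \<alpha>) + 6 * real B3"
      unfolding K_def by (rule kappa_bound) (use assms in auto)
    also have "\<dots> \<le> (12 * K + 6) * X"
    proof -
      have "real B2 powr (2 - \<alpha>) \<le> real B2 powr (2 - \<alpha>) * ln (2 + real B3)"
        using ln1 by (simp add: mult_le_cancel_left1)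
      then have "12 * K * real B2 powr (2 - \<alpha>) \<le> 12 * K * (real B2 powr (2 - \<alpha>) * ln (2 + real B3))"
        using K0 by (intro mult_left_mono) auto
      moreover have "12 * K * (real B2 powr (2 - \<alpha>) * ln (2 + real B3)) + 6 * real B3 \<le> (12 * K + 6) * X"
        unfolding X_def using K0 ln1 by (simp add: algebra_simps)
      ultimately show ?thesis by linarith
    qed
    finally have b2: "real (card P2) \<le> (12 * K + 6) * X" .
    have "card ?P \<le> card P1 + card P2" unfolding PU by (rule card_Un_le)
    then have "real (card ?P) \<le> (5 + 26 * K) * X + (12 * K + 6) * X" using b1 b2 by linarith
    also have "\<dots> = (11 + 38 * K) * X" by (simp add: algebra_simps)
    finally show ?thesis unfolding K_def X_def .
  qed
qed



lemma Sres_mem: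
  "(k, k1, k2, k3) \<in> Sres \<alpha> C0 m N N1 N2 N3 \<longleftrightarrow> k = k1 - k2 + k3 \<and> k2 \<noteq> k1 \<and> k2 \<noteq> k3 \<and>
    \<bar>ps \<alpha> (real_of_int k1) - ps \<alpha> (real_of_int k2) + ps \<alpha> (real_of_int k3) - ps \<alpha> (real_of_int k) - m\<bar> \<le> C0 \<and>
    \<bar>k\<bar> \<le> int N \<and> \<bar>k1\<bar> \<le> int N1 \<and> \<bar>k2\<bar> \<le> int N2 \<and> \<bar>k3\<bar> \<le> int N3"
  by (simp add: Sres_def ps_def)

lemma via_diff:
  fixes A :: "'a set" and f :: "'a \<Rightarrow> int \<times> int" and a b xc :: int and L M :: nat
  assumes "1 < \<alpha>" "\<alpha> < 2" "C0 \<ge> 0" "M \<ge> 1" "b - a + 1 \<le> 5 * int M" "\<And>x. \<bar>D x\<bar> = \<bar>x - xc\<bar>"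
    "inj_on f A"
    "\<And>t. t \<in> A \<Longrightarrow> f t \<in> {(x::int,y::int). a \<le> x \<and> x \<le> b \<and> x \<noteq> xc \<and> \<bar>y\<bar> \<le> int L \<and>
            \<bar>ps \<alpha> (real_of_int y + real_of_int (D x)) - ps \<alpha> (real_of_int y) - c x\<bar> \<le> C0}"
  shows "real (card A) \<le> (11 + 38 * (2 * C0 / (\<alpha> * (\<alpha> - 1)))) * (real L powr (2 - \<alpha>) * ln (2 + real M) + real M)"
proof -
  define T where "T = {(x::int,y::int). a \<le> x \<and> x \<le> b \<and> x \<noteq> xc \<and> \<bar>y\<bar> \<le> int L \<and>
            \<bar>ps \<alpha> (real_of_int y + real_of_int (D x)) - ps \<alpha> (real_of_int y) - c x\<bar> \<le> C0}"
  have sub: "f ` A \<subseteq> T" unfolding T_def by (rule image_subsetI[OF assms(8)])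
  have fT: "finite T" unfolding T_def by (rule fin_pairs)
  have "card A \<le> card T" by (rule card_inj_on_le[OF assms(7) sub fT])
  then have "real (card A) \<le> real (card T)" by simp
  also have "\<dots> \<le> (5 + 26 * (2 * C0 / (\<alpha> * (\<alpha> - 1)))) * (real L powr (2 - \<alpha>) * ln (2 + real M) + real M)"
    unfolding T_def by (rule diff_count[OF assms(1-6)])
  also have "\<dots> \<le> (11 + 38 * (2 * C0 / (\<alpha> * (\<alpha> - 1)))) * (real L powr (2 - \<alpha>) * ln (2 + real M) + real M)"
  proof (rule mult_right_mono)
    have "2 * C0 / (\<alpha> * (\<alpha> - 1)) \<ge> 0" using assms by auto
    then show "5 + 26 * (2 * C0 / (\<alpha> * (\<alpha> - 1))) \<le> 11 + 38 * (2 * C0 / (\<alpha> * (\<alpha> - 1)))" by linarith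
    have "ln (2 + real M) \<ge> 0" by simp
    then show "0 \<le> real L powr (2 - \<alpha>) * ln (2 + real M) + real M" by simp
  qed
  finally show ?thesis .
qed

lemma via_hard:
  fixes A :: "'a set" and f :: "'a \<Rightarrow> int \<times> int" and ac :: int and B2 B3 :: nat
  assumes "1 < \<alpha>" "\<alpha> < 2" "C0 \<ge> 0" "B2 \<ge> 1" "B3 \<ge> 1"
    "inj_on f A"
    "\<And>t. t \<in> A \<Longrightarrow> f t \<in> {(y::int,z::int). \<bar>y\<bar> \<le> int B2 \<and> \<bar>z\<bar> \<le> int B3 \<and> y \<noteq> ac \<and> y \<noteq> z \<and>
      \<bar>ps \<alpha> (real_of_int ac) - ps \<alpha> (real_of_int y) + ps \<alpha> (real_of_int z) - ps \<alpha> (real_of_int (ac - y + z)) - m\<bar> \<le> C0}"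
  shows "real (card A) \<le> (11 + 38 * (2 * C0 / (\<alpha> * (\<alpha> - 1)))) * (real B2 powr (2 - \<alpha>) * ln (2 + real B3) + real B3)"
proof -
  define T where "T = {(y::int,z::int). \<bar>y\<bar> \<le> int B2 \<and> \<bar>z\<bar> \<le> int B3 \<and> y \<noteq> ac \<and> y \<noteq> z \<and>
      \<bar>ps \<alpha> (real_of_int ac) - ps \<alpha> (real_of_int y) + ps \<alpha> (real_of_int z) - ps \<alpha> (real_of_int (ac - y + z)) - m\<bar> \<le> C0}"
  have fT: "finite T" unfolding T_def
    by (rule finite_subset[of _ "{-int B2..int B2} \<times> {-int B3..int B3}"]) auto
  have sub: "f ` A \<subseteq> T" unfolding T_def by (rule image_subsetI[OF assms(7)])
  have "card A \<le> card T" by (rule card_inj_on_le[OF assms(6) sub fT])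
  then have "real (card A) \<le> real (card T)" by simp
  also have "\<dots> \<le> (11 + 38 * (2 * C0 / (\<alpha> * (\<alpha> - 1)))) * (real B2 powr (2 - \<alpha>) * ln (2 + real B3) + real B3)"
    unfolding T_def by (rule hard[OF assms(1-5)])
  finally show ?thesis .
qed



abbreviation "CC \<alpha> C0 \<equiv> (11 + 38 * (2 * C0 / (\<alpha> * (\<alpha> - 1))))"

lemma Sk_a:
  assumes "1 < \<alpha>" "\<alpha> < 2" "C0 \<ge> 0" "N1 \<ge> 1"
  shows "real (card {(k1, k2, k3). (k, k1, k2, k3) \<in> Sres \<alpha> C0 m N N1 N2 N3})
    \<le> CC \<alpha> C0 * (real N3 powr (2 - \<alpha>) * ln (2 + real N1) + real N1)"
proof (rule via_diff[where f = "\<lambda>(k1, k2, k3). (k1,k3)" and a = "- int N1" and b = "int N1" and xc = k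
      and D = "\<lambda>x. x - k" and c = "\<lambda>x. ps \<alpha> (real_of_int x) - ps \<alpha> (real_of_int k) - m"])
  show "inj_on (\<lambda>(k1, k2, k3). (k1,k3)) {(k1, k2, k3). (k, k1, k2, k3) \<in> Sres \<alpha> C0 m N N1 N2 N3}"
    by (auto simp: inj_on_def Sres_mem)
  fix t assume "t \<in> {(k1, k2, k3). (k, k1, k2, k3) \<in> Sres \<alpha> C0 m N N1 N2 N3}"
  then obtain k1 k2 k3 where t: "t = (k1, k2, k3)" and h: "k = k1 - k2 + k3" "k2 \<noteq> k1" "k2 \<noteq> k3"
    "\<bar>ps \<alpha> (real_of_int k1) - ps \<alpha> (real_of_int k2) + ps \<alpha> (real_of_int k3) - ps \<alpha> (real_of_int k) - m\<bar> \<le> C0"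
    "\<bar>k1\<bar> \<le> int N1" "\<bar>k2\<bar> \<le> int N2" "\<bar>k3\<bar> \<le> int N3"
    by (cases t) (auto simp: Sres_mem)
  have e: "ps \<alpha> (real_of_int k3 + real_of_int (k1 - k)) = ps \<alpha> (real_of_int k2)" by (simp add: h(1) algebra_simps)
  have A: "\<bar>ps \<alpha> (real_of_int k3 + real_of_int (k1 - k)) - ps \<alpha> (real_of_int k3) - (ps \<alpha> (real_of_int k1) - ps \<alpha> (real_of_int k) - m)\<bar> \<le> C0"
    unfolding e using h(4) by (smt (verit))
  show "(\<lambda>(k1, k2, k3). (k1,k3)) t \<in> {(x::int,y::int). - int N1 \<le> x \<and> x \<le> int N1 \<and> x \<noteq> k \<and> \<bar>y\<bar> \<le> int N3 \<and>
            \<bar>ps \<alpha> (real_of_int y + real_of_int ((\<lambda>x. x - k) x)) - ps \<alpha> (real_of_int y) - (\<lambda>x. ps \<alpha> (real_of_int x) - ps \<alpha> (real_of_int k) - m) x\<bar> \<le> C0}"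
    using h A by (auto simp: t)
qed (use assms in auto)

lemma Sk_b:
  assumes "1 < \<alpha>" "\<alpha> < 2" "C0 \<ge> 0" "N1 \<ge> 1"
  shows "real (card {(k1, k2, k3). (k, k1, k2, k3) \<in> Sres \<alpha> C0 m N N1 N2 N3})
    \<le> CC \<alpha> C0 * (real N2 powr (2 - \<alpha>) * ln (2 + real N1) + real N1)"
proof (rule via_diff[where f = "\<lambda>(k1, k2, k3). (k1,k2)" and a = "- int N1" and b = "int N1" and xc = k
      and D = "\<lambda>x. k - x" and c = "\<lambda>x. ps \<alpha> (real_of_int k) + m - ps \<alpha> (real_of_int x)"])
  show "inj_on (\<lambda>(k1, k2, k3). (k1,k2)) {(k1, k2, k3). (k, k1, k2, k3) \<in> Sres \<alpha> C0 m N N1 N2 N3}"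
    by (auto simp: inj_on_def Sres_mem)
  fix t assume "t \<in> {(k1, k2, k3). (k, k1, k2, k3) \<in> Sres \<alpha> C0 m N N1 N2 N3}"
  then obtain k1 k2 k3 where t: "t = (k1, k2, k3)" and h: "k = k1 - k2 + k3" "k2 \<noteq> k1" "k2 \<noteq> k3"
    "\<bar>ps \<alpha> (real_of_int k1) - ps \<alpha> (real_of_int k2) + ps \<alpha> (real_of_int k3) - ps \<alpha> (real_of_int k) - m\<bar> \<le> C0"
    "\<bar>k1\<bar> \<le> int N1" "\<bar>k2\<bar> \<le> int N2" "\<bar>k3\<bar> \<le> int N3"
    by (cases t) (auto simp: Sres_mem)
  have e: "ps \<alpha> (real_of_int k2 + real_of_int (k - k1)) = ps \<alpha> (real_of_int k3)" by (simp add: h(1) algebra_simps)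
  have A: "\<bar>ps \<alpha> (real_of_int k2 + real_of_int (k - k1)) - ps \<alpha> (real_of_int k2) - (ps \<alpha> (real_of_int k) + m - ps \<alpha> (real_of_int k1))\<bar> \<le> C0"
    unfolding e using h(4) by (smt (verit))
  show "(\<lambda>(k1, k2, k3). (k1,k2)) t \<in> {(x::int,y::int). - int N1 \<le> x \<and> x \<le> int N1 \<and> x \<noteq> k \<and> \<bar>y\<bar> \<le> int N2 \<and>
            \<bar>ps \<alpha> (real_of_int y + real_of_int ((\<lambda>x. k - x) x)) - ps \<alpha> (real_of_int y) - (\<lambda>x. ps \<alpha> (real_of_int k) + m - ps \<alpha> (real_of_int x)) x\<bar> \<le> C0}"
    using h A by (auto simp: t)
qed (use assms in auto)

lemma Sk_c:
  assumes "1 < \<alpha>" "\<alpha> < 2" "C0 \<ge> 0" "N3 \<ge> 1"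
  shows "real (card {(k1, k2, k3). (k, k1, k2, k3) \<in> Sres \<alpha> C0 m N N1 N2 N3})
    \<le> CC \<alpha> C0 * (real N1 powr (2 - \<alpha>) * ln (2 + real N3) + real N3)"
proof (rule via_diff[where f = "\<lambda>(k1, k2, k3). (k3,k1)" and a = "- int N3" and b = "int N3" and xc = k
      and D = "\<lambda>x. x - k" and c = "\<lambda>x. ps \<alpha> (real_of_int x) - ps \<alpha> (real_of_int k) - m"])
  show "inj_on (\<lambda>(k1, k2, k3). (k3,k1)) {(k1, k2, k3). (k, k1, k2, k3) \<in> Sres \<alpha> C0 m N N1 N2 N3}"
    by (auto simp: inj_on_def Sres_mem)
  fix t assume "t \<in> {(k1, k2, k3). (k, k1, k2, k3) \<in> Sres \<alpha> C0 m N N1 N2 N3}"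
  then obtain k1 k2 k3 where t: "t = (k1, k2, k3)" and h: "k = k1 - k2 + k3" "k2 \<noteq> k1" "k2 \<noteq> k3"
    "\<bar>ps \<alpha> (real_of_int k1) - ps \<alpha> (real_of_int k2) + ps \<alpha> (real_of_int k3) - ps \<alpha> (real_of_int k) - m\<bar> \<le> C0"
    "\<bar>k1\<bar> \<le> int N1" "\<bar>k2\<bar> \<le> int N2" "\<bar>k3\<bar> \<le> int N3"
    by (cases t) (auto simp: Sres_mem)
  have e: "ps \<alpha> (real_of_int k1 + real_of_int (k3 - k)) = ps \<alpha> (real_of_int k2)" by (simp add: h(1) algebra_simps)
  have A: "\<bar>ps \<alpha> (real_of_int k1 + real_of_int (k3 - k)) - ps \<alpha> (real_of_int k1) - (ps \<alpha> (real_of_int k3) - ps \<alpha> (real_of_int k) - m)\<bar> \<le> C0"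
    unfolding e using h(4) by (smt (verit))
  show "(\<lambda>(k1, k2, k3). (k3,k1)) t \<in> {(x::int,y::int). - int N3 \<le> x \<and> x \<le> int N3 \<and> x \<noteq> k \<and> \<bar>y\<bar> \<le> int N1 \<and>
            \<bar>ps \<alpha> (real_of_int y + real_of_int ((\<lambda>x. x - k) x)) - ps \<alpha> (real_of_int y) - (\<lambda>x. ps \<alpha> (real_of_int x) - ps \<alpha> (real_of_int k) - m) x\<bar> \<le> C0}"
    using h A by (auto simp: t)
qed (use assms in auto)

lemma Sk_d:
  assumes "1 < \<alpha>" "\<alpha> < 2" "C0 \<ge> 0" "N3 \<ge> 1"
  shows "real (card {(k1, k2, k3). (k, k1, k2, k3) \<in> Sres \<alpha> C0 m N N1 N2 N3})
    \<le> CC \<alpha> C0 * (real N2 powr (2 - \<alpha>) * ln (2 + real N3) + real N3)"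
proof (rule via_diff[where f = "\<lambda>(k1, k2, k3). (k3,k2)" and a = "- int N3" and b = "int N3" and xc = k
      and D = "\<lambda>x. k - x" and c = "\<lambda>x. ps \<alpha> (real_of_int k) + m - ps \<alpha> (real_of_int x)"])
  show "inj_on (\<lambda>(k1, k2, k3). (k3,k2)) {(k1, k2, k3). (k, k1, k2, k3) \<in> Sres \<alpha> C0 m N N1 N2 N3}"
    by (auto simp: inj_on_def Sres_mem)
  fix t assume "t \<in> {(k1, k2, k3). (k, k1, k2, k3) \<in> Sres \<alpha> C0 m N N1 N2 N3}"
  then obtain k1 k2 k3 where t: "t = (k1, k2, k3)" and h: "k = k1 - k2 + k3" "k2 \<noteq> k1" "k2 \<noteq> k3"
    "\<bar>ps \<alpha> (real_of_int k1) - ps \<alpha> (real_of_int k2) + ps \<alpha> (real_of_int k3) - ps \<alpha> (real_of_int k) - m\<bar> \<le> C0"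
    "\<bar>k1\<bar> \<le> int N1" "\<bar>k2\<bar> \<le> int N2" "\<bar>k3\<bar> \<le> int N3"
    by (cases t) (auto simp: Sres_mem)
  have e: "ps \<alpha> (real_of_int k2 + real_of_int (k - k3)) = ps \<alpha> (real_of_int k1)" by (simp add: h(1) algebra_simps)
  have A: "\<bar>ps \<alpha> (real_of_int k2 + real_of_int (k - k3)) - ps \<alpha> (real_of_int k2) - (ps \<alpha> (real_of_int k) + m - ps \<alpha> (real_of_int k3))\<bar> \<le> C0"
    unfolding e using h(4) by (smt (verit))
  show "(\<lambda>(k1, k2, k3). (k3,k2)) t \<in> {(x::int,y::int). - int N3 \<le> x \<and> x \<le> int N3 \<and> x \<noteq> k \<and> \<bar>y\<bar> \<le> int N2 \<and>
            \<bar>ps \<alpha> (real_of_int y + real_of_int ((\<lambda>x. k - x) x)) - ps \<alpha> (real_of_int y) - (\<lambda>x. ps \<alpha> (real_of_int k) + m - ps \<alpha> (real_of_int x)) x\<bar> \<le> C0}"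
    using h A by (auto simp: t)
qed (use assms in auto)

lemma Sk1_e:
  assumes "1 < \<alpha>" "\<alpha> < 2" "C0 \<ge> 0" "N2 \<ge> 1"
  shows "real (card {(k, k2, k3). (k, k1, k2, k3) \<in> Sres \<alpha> C0 m N N1 N2 N3})
    \<le> CC \<alpha> C0 * (real N3 powr (2 - \<alpha>) * ln (2 + real N2) + real N2)"
proof (rule via_diff[where f = "\<lambda>(k, k2, k3). (k2,k3)" and a = "- int N2" and b = "int N2" and xc = k1
      and D = "\<lambda>x. k1 - x" and c = "\<lambda>x. ps \<alpha> (real_of_int k1) - ps \<alpha> (real_of_int x) - m"])
  show "inj_on (\<lambda>(k, k2, k3). (k2,k3)) {(k, k2, k3). (k, k1, k2, k3) \<in> Sres \<alpha> C0 m N N1 N2 N3}"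
    by (auto simp: inj_on_def Sres_mem)
  fix t assume "t \<in> {(k, k2, k3). (k, k1, k2, k3) \<in> Sres \<alpha> C0 m N N1 N2 N3}"
  then obtain k k2 k3 where t: "t = (k, k2, k3)" and h: "k = k1 - k2 + k3" "k2 \<noteq> k1" "k2 \<noteq> k3"
    "\<bar>ps \<alpha> (real_of_int k1) - ps \<alpha> (real_of_int k2) + ps \<alpha> (real_of_int k3) - ps \<alpha> (real_of_int k) - m\<bar> \<le> C0"
    "\<bar>k1\<bar> \<le> int N1" "\<bar>k2\<bar> \<le> int N2" "\<bar>k3\<bar> \<le> int N3"
    by (cases t) (auto simp: Sres_mem)
  have e: "ps \<alpha> (real_of_int k3 + real_of_int (k1 - k2)) = ps \<alpha> (real_of_int k)" by (simp add: h(1) algebra_simps)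
  have A: "\<bar>ps \<alpha> (real_of_int k3 + real_of_int (k1 - k2)) - ps \<alpha> (real_of_int k3) - (ps \<alpha> (real_of_int k1) - ps \<alpha> (real_of_int k2) - m)\<bar> \<le> C0"
    unfolding e using h(4) by (smt (verit))
  show "(\<lambda>(k, k2, k3). (k2,k3)) t \<in> {(x::int,y::int). - int N2 \<le> x \<and> x \<le> int N2 \<and> x \<noteq> k1 \<and> \<bar>y\<bar> \<le> int N3 \<and>
            \<bar>ps \<alpha> (real_of_int y + real_of_int ((\<lambda>x. k1 - x) x)) - ps \<alpha> (real_of_int y) - (\<lambda>x. ps \<alpha> (real_of_int k1) - ps \<alpha> (real_of_int x) - m) x\<bar> \<le> C0}"
    using h A by (auto simp: t)
qed (use assms in auto)

lemma Sk2_g: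
  assumes "1 < \<alpha>" "\<alpha> < 2" "C0 \<ge> 0" "N1 \<ge> 1"
  shows "real (card {(k, k1, k3). (k, k1, k2, k3) \<in> Sres \<alpha> C0 m N N1 N2 N3})
    \<le> CC \<alpha> C0 * (real N3 powr (2 - \<alpha>) * ln (2 + real N1) + real N1)"
proof (rule via_diff[where f = "\<lambda>(k, k1, k3). (k1,k3)" and a = "- int N1" and b = "int N1" and xc = k2
      and D = "\<lambda>x. x - k2" and c = "\<lambda>x. ps \<alpha> (real_of_int x) - ps \<alpha> (real_of_int k2) - m"])
  show "inj_on (\<lambda>(k, k1, k3). (k1,k3)) {(k, k1, k3). (k, k1, k2, k3) \<in> Sres \<alpha> C0 m N N1 N2 N3}"
    by (auto simp: inj_on_def Sres_mem)
  fix t assume "t \<in> {(k, k1, k3). (k, k1, k2, k3) \<in> Sres \<alpha> C0 m N N1 N2 N3}"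
  then obtain k k1 k3 where t: "t = (k, k1, k3)" and h: "k = k1 - k2 + k3" "k2 \<noteq> k1" "k2 \<noteq> k3"
    "\<bar>ps \<alpha> (real_of_int k1) - ps \<alpha> (real_of_int k2) + ps \<alpha> (real_of_int k3) - ps \<alpha> (real_of_int k) - m\<bar> \<le> C0"
    "\<bar>k1\<bar> \<le> int N1" "\<bar>k2\<bar> \<le> int N2" "\<bar>k3\<bar> \<le> int N3"
    by (cases t) (auto simp: Sres_mem)
  have e: "ps \<alpha> (real_of_int k3 + real_of_int (k1 - k2)) = ps \<alpha> (real_of_int k)" by (simp add: h(1) algebra_simps)
  have A: "\<bar>ps \<alpha> (real_of_int k3 + real_of_int (k1 - k2)) - ps \<alpha> (real_of_int k3) - (ps \<alpha> (real_of_int k1) - ps \<alpha> (real_of_int k2) - m)\<bar> \<le> C0"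
    unfolding e using h(4) by (smt (verit))
  show "(\<lambda>(k, k1, k3). (k1,k3)) t \<in> {(x::int,y::int). - int N1 \<le> x \<and> x \<le> int N1 \<and> x \<noteq> k2 \<and> \<bar>y\<bar> \<le> int N3 \<and>
            \<bar>ps \<alpha> (real_of_int y + real_of_int ((\<lambda>x. x - k2) x)) - ps \<alpha> (real_of_int y) - (\<lambda>x. ps \<alpha> (real_of_int x) - ps \<alpha> (real_of_int k2) - m) x\<bar> \<le> C0}"
    using h A by (auto simp: t)
qed (use assms in auto)

lemma Sk2_h:
  assumes "1 < \<alpha>" "\<alpha> < 2" "C0 \<ge> 0" "N3 \<ge> 1"
  shows "real (card {(k, k1, k3). (k, k1, k2, k3) \<in> Sres \<alpha> C0 m N N1 N2 N3})
    \<le> CC \<alpha> C0 * (real N1 powr (2 - \<alpha>) * ln (2 + real N3) + real N3)"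
proof (rule via_diff[where f = "\<lambda>(k, k1, k3). (k3,k1)" and a = "- int N3" and b = "int N3" and xc = k2
      and D = "\<lambda>x. x - k2" and c = "\<lambda>x. ps \<alpha> (real_of_int x) - ps \<alpha> (real_of_int k2) - m"])
  show "inj_on (\<lambda>(k, k1, k3). (k3,k1)) {(k, k1, k3). (k, k1, k2, k3) \<in> Sres \<alpha> C0 m N N1 N2 N3}"
    by (auto simp: inj_on_def Sres_mem)
  fix t assume "t \<in> {(k, k1, k3). (k, k1, k2, k3) \<in> Sres \<alpha> C0 m N N1 N2 N3}"
  then obtain k k1 k3 where t: "t = (k, k1, k3)" and h: "k = k1 - k2 + k3" "k2 \<noteq> k1" "k2 \<noteq> k3"
    "\<bar>ps \<alpha> (real_of_int k1) - ps \<alpha> (real_of_int k2) + ps \<alpha> (real_of_int k3) - ps \<alpha> (real_of_int k) - m\<bar> \<le> C0"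
    "\<bar>k1\<bar> \<le> int N1" "\<bar>k2\<bar> \<le> int N2" "\<bar>k3\<bar> \<le> int N3"
    by (cases t) (auto simp: Sres_mem)
  have e: "ps \<alpha> (real_of_int k1 + real_of_int (k3 - k2)) = ps \<alpha> (real_of_int k)" by (simp add: h(1) algebra_simps)
  have A: "\<bar>ps \<alpha> (real_of_int k1 + real_of_int (k3 - k2)) - ps \<alpha> (real_of_int k1) - (ps \<alpha> (real_of_int k3) - ps \<alpha> (real_of_int k2) - m)\<bar> \<le> C0"
    unfolding e using h(4) by (smt (verit))
  show "(\<lambda>(k, k1, k3). (k3,k1)) t \<in> {(x::int,y::int). - int N3 \<le> x \<and> x \<le> int N3 \<and> x \<noteq> k2 \<and> \<bar>y\<bar> \<le> int N1 \<and>
            \<bar>ps \<alpha> (real_of_int y + real_of_int ((\<lambda>x. x - k2) x)) - ps \<alpha> (real_of_int y) - (\<lambda>x. ps \<alpha> (real_of_int x) - ps \<alpha> (real_of_int k2) - m) x\<bar> \<le> C0}"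
    using h A by (auto simp: t)
qed (use assms in auto)

lemma Sk3_i:
  assumes "1 < \<alpha>" "\<alpha> < 2" "C0 \<ge> 0" "N2 \<ge> 1"
  shows "real (card {(k, k1, k2). (k, k1, k2, k3) \<in> Sres \<alpha> C0 m N N1 N2 N3})
    \<le> CC \<alpha> C0 * (real N1 powr (2 - \<alpha>) * ln (2 + real N2) + real N2)"
proof (rule via_diff[where f = "\<lambda>(k, k1, k2). (k2,k1)" and a = "- int N2" and b = "int N2" and xc = k3
      and D = "\<lambda>x. k3 - x" and c = "\<lambda>x. ps \<alpha> (real_of_int k3) - ps \<alpha> (real_of_int x) - m"])
  show "inj_on (\<lambda>(k, k1, k2). (k2,k1)) {(k, k1, k2). (k, k1, k2, k3) \<in> Sres \<alpha> C0 m N N1 N2 N3}"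
    by (auto simp: inj_on_def Sres_mem)
  fix t assume "t \<in> {(k, k1, k2). (k, k1, k2, k3) \<in> Sres \<alpha> C0 m N N1 N2 N3}"
  then obtain k k1 k2 where t: "t = (k, k1, k2)" and h: "k = k1 - k2 + k3" "k2 \<noteq> k1" "k2 \<noteq> k3"
    "\<bar>ps \<alpha> (real_of_int k1) - ps \<alpha> (real_of_int k2) + ps \<alpha> (real_of_int k3) - ps \<alpha> (real_of_int k) - m\<bar> \<le> C0"
    "\<bar>k1\<bar> \<le> int N1" "\<bar>k2\<bar> \<le> int N2" "\<bar>k3\<bar> \<le> int N3"
    by (cases t) (auto simp: Sres_mem)
  have e: "ps \<alpha> (real_of_int k1 + real_of_int (k3 - k2)) = ps \<alpha> (real_of_int k)" by (simp add: h(1) algebra_simps)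
  have A: "\<bar>ps \<alpha> (real_of_int k1 + real_of_int (k3 - k2)) - ps \<alpha> (real_of_int k1) - (ps \<alpha> (real_of_int k3) - ps \<alpha> (real_of_int k2) - m)\<bar> \<le> C0"
    unfolding e using h(4) by (smt (verit))
  show "(\<lambda>(k, k1, k2). (k2,k1)) t \<in> {(x::int,y::int). - int N2 \<le> x \<and> x \<le> int N2 \<and> x \<noteq> k3 \<and> \<bar>y\<bar> \<le> int N1 \<and>
            \<bar>ps \<alpha> (real_of_int y + real_of_int ((\<lambda>x. k3 - x) x)) - ps \<alpha> (real_of_int y) - (\<lambda>x. ps \<alpha> (real_of_int k3) - ps \<alpha> (real_of_int x) - m) x\<bar> \<le> C0}"
    using h A by (auto simp: t)
qed (use assms in auto)

lemma Sk1_f: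
  assumes "1 < \<alpha>" "\<alpha> < 2" "C0 \<ge> 0" "N2 \<ge> 1" "N3 \<ge> 1"
  shows "real (card {(k, k2, k3). (k, k1, k2, k3) \<in> Sres \<alpha> C0 m N N1 N2 N3})
    \<le> CC \<alpha> C0 * (real N2 powr (2 - \<alpha>) * ln (2 + real N3) + real N3)"
proof (rule via_hard[where f = "\<lambda>(k, k2, k3). (k2,k3)" and ac = k1 and m = m])
  show "inj_on (\<lambda>(k, k2, k3). (k2,k3)) {(k, k2, k3). (k, k1, k2, k3) \<in> Sres \<alpha> C0 m N N1 N2 N3}"
    by (auto simp: inj_on_def Sres_mem)
  fix t assume "t \<in> {(k, k2, k3). (k, k1, k2, k3) \<in> Sres \<alpha> C0 m N N1 N2 N3}"
  then obtain k k2 k3 where t: "t = (k, k2, k3)" and h: "k = k1 - k2 + k3" "k2 \<noteq> k1" "k2 \<noteq> k3"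
    "\<bar>ps \<alpha> (real_of_int k1) - ps \<alpha> (real_of_int k2) + ps \<alpha> (real_of_int k3) - ps \<alpha> (real_of_int k) - m\<bar> \<le> C0"
    "\<bar>k1\<bar> \<le> int N1" "\<bar>k2\<bar> \<le> int N2" "\<bar>k3\<bar> \<le> int N3"
    by (cases t) (auto simp: Sres_mem)
  have e: "ps \<alpha> (real_of_int (k1 - k2 + k3)) = ps \<alpha> (real_of_int k)" by (simp add: h(1) algebra_simps)
  have A: "\<bar>ps \<alpha> (real_of_int k1) - ps \<alpha> (real_of_int k2) + ps \<alpha> (real_of_int k3) - ps \<alpha> (real_of_int (k1 - k2 + k3)) - m\<bar> \<le> C0"
    unfolding e using h(4) by (smt (verit))
  show "(\<lambda>(k, k2, k3). (k2,k3)) t \<in> {(y::int,z::int). \<bar>y\<bar> \<le> int N2 \<and> \<bar>z\<bar> \<le> int N3 \<and> y \<noteq> k1 \<and> y \<noteq> z \<and>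
      \<bar>ps \<alpha> (real_of_int k1) - ps \<alpha> (real_of_int y) + ps \<alpha> (real_of_int z) - ps \<alpha> (real_of_int (k1 - y + z)) - m\<bar> \<le> C0}"
    using h A by (auto simp: t)
qed (use assms in auto)

lemma Sk3_j:
  assumes "1 < \<alpha>" "\<alpha> < 2" "C0 \<ge> 0" "N2 \<ge> 1" "N1 \<ge> 1"
  shows "real (card {(k, k1, k2). (k, k1, k2, k3) \<in> Sres \<alpha> C0 m N N1 N2 N3})
    \<le> CC \<alpha> C0 * (real N2 powr (2 - \<alpha>) * ln (2 + real N1) + real N1)"
proof (rule via_hard[where f = "\<lambda>(k, k1, k2). (k2,k1)" and ac = k3 and m = m])
  show "inj_on (\<lambda>(k, k1, k2). (k2,k1)) {(k, k1, k2). (k, k1, k2, k3) \<in> Sres \<alpha> C0 m N N1 N2 N3}"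
    by (auto simp: inj_on_def Sres_mem)
  fix t assume "t \<in> {(k, k1, k2). (k, k1, k2, k3) \<in> Sres \<alpha> C0 m N N1 N2 N3}"
  then obtain k k1 k2 where t: "t = (k, k1, k2)" and h: "k = k1 - k2 + k3" "k2 \<noteq> k1" "k2 \<noteq> k3"
    "\<bar>ps \<alpha> (real_of_int k1) - ps \<alpha> (real_of_int k2) + ps \<alpha> (real_of_int k3) - ps \<alpha> (real_of_int k) - m\<bar> \<le> C0"
    "\<bar>k1\<bar> \<le> int N1" "\<bar>k2\<bar> \<le> int N2" "\<bar>k3\<bar> \<le> int N3"
    by (cases t) (auto simp: Sres_mem)
  have e: "ps \<alpha> (real_of_int (k3 - k2 + k1)) = ps \<alpha> (real_of_int k)" by (simp add: h(1) algebra_simps)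
  have A: "\<bar>ps \<alpha> (real_of_int k3) - ps \<alpha> (real_of_int k2) + ps \<alpha> (real_of_int k1) - ps \<alpha> (real_of_int (k3 - k2 + k1)) - m\<bar> \<le> C0"
    unfolding e using h(4) by (smt (verit))
  show "(\<lambda>(k, k1, k2). (k2,k1)) t \<in> {(y::int,z::int). \<bar>y\<bar> \<le> int N2 \<and> \<bar>z\<bar> \<le> int N1 \<and> y \<noteq> k3 \<and> y \<noteq> z \<and>
      \<bar>ps \<alpha> (real_of_int k3) - ps \<alpha> (real_of_int y) + ps \<alpha> (real_of_int z) - ps \<alpha> (real_of_int (k3 - y + z)) - m\<bar> \<le> C0}"
    using h A by (auto simp: t)
qed (use assms in auto)



lemma le_min2: "x \<le> C * A \<Longrightarrow> x \<le> C * B \<Longrightarrow> x \<le> C * min A B"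
  by (cases "A \<le> B") (auto simp: min_def)

theorem corollary2p6:
  fixes \<alpha> C0 :: real
  assumes "1 < \<alpha>" and "\<alpha> < 2" and "0 < C0"
  shows "\<exists>C>0. \<forall>N N1 N2 N3 :: nat. \<forall>m :: real.
    dyadic N \<longrightarrow> dyadic N1 \<longrightarrow> dyadic N2 \<longrightarrow> dyadic N3 \<longrightarrow>
    1 \<le> N1 \<longrightarrow> N1 \<le> N \<longrightarrow> 1 \<le> N2 \<longrightarrow> N2 \<le> N \<longrightarrow> 1 \<le> N3 \<longrightarrow> N3 \<le> N \<longrightarrow>
    (let S = Sres \<alpha> C0 m N N1 N2 N3 in
     (\<forall>k. real (card {(k1, k2, k3). (k, k1, k2, k3) \<in> S}) \<le> C * min
        (real (min N2 N3) powr (2 - \<alpha>) * ln (2 + real N1) + real N1)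
        (real (min N1 N2) powr (2 - \<alpha>) * ln (2 + real N3) + real N3)) \<and>
     (\<forall>k1. real (card {(k, k2, k3). (k, k1, k2, k3) \<in> S}) \<le> C * min
        (real N3 powr (2 - \<alpha>) * ln (2 + real N2) + real N2)
        (real N2 powr (2 - \<alpha>) * ln (2 + real N3) + real N3)) \<and>
     (\<forall>k2. real (card {(k, k1, k3). (k, k1, k2, k3) \<in> S}) \<le> C * min
        (real N3 powr (2 - \<alpha>) * ln (2 + real N1) + real N1)
        (real N1 powr (2 - \<alpha>) * ln (2 + real N3) + real N3)) \<and>
     (\<forall>k3. real (card {(k, k1, k2). (k, k1, k2, k3) \<in> S}) \<le> C * min
        (real N1 powr (2 - \<alpha>) * ln (2 + real N2) + real N2)
        (real N2 powr (2 - \<alpha>) * ln (2 + real N1) + real N1)))"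
proof -
  have Cpos: "0 < CC \<alpha> C0" using assms by (auto intro!: add_pos_nonneg)
  have C0': "C0 \<ge> 0" using assms by simp
  note ab = assms(1,2) C0'
  show ?thesis
  proof (intro exI[of _ "CC \<alpha> C0"] conjI allI impI)
    show "0 < CC \<alpha> C0" by (rule Cpos)
    fix N N1 N2 N3 :: nat and m :: real
    assume h: "dyadic N" "dyadic N1" "dyadic N2" "dyadic N3" "1 \<le> N1" "N1 \<le> N" "1 \<le> N2" "N2 \<le> N" "1 \<le> N3" "N3 \<le> N"
    show "let S = Sres \<alpha> C0 m N N1 N2 N3 in
     (\<forall>k. real (card {(k1, k2, k3). (k, k1, k2, k3) \<in> S}) \<le> CC \<alpha> C0 * min
        (real (min N2 N3) powr (2 - \<alpha>) * ln (2 + real N1) + real N1)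
        (real (min N1 N2) powr (2 - \<alpha>) * ln (2 + real N3) + real N3)) \<and>
     (\<forall>k1. real (card {(k, k2, k3). (k, k1, k2, k3) \<in> S}) \<le> CC \<alpha> C0 * min
        (real N3 powr (2 - \<alpha>) * ln (2 + real N2) + real N2)
        (real N2 powr (2 - \<alpha>) * ln (2 + real N3) + real N3)) \<and>
     (\<forall>k2. real (card {(k, k1, k3). (k, k1, k2, k3) \<in> S}) \<le> CC \<alpha> C0 * min
        (real N3 powr (2 - \<alpha>) * ln (2 + real N1) + real N1)
        (real N1 powr (2 - \<alpha>) * ln (2 + real N3) + real N3)) \<and>
     (\<forall>k3. real (card {(k, k1, k2). (k, k1, k2, k3) \<in> S}) \<le> CC \<alpha> C0 * min
        (real N1 powr (2 - \<alpha>) * ln (2 + real N2) + real N2)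
        (real N2 powr (2 - \<alpha>) * ln (2 + real N1) + real N1))"
      unfolding Let_def
    proof (intro conjI allI le_min2)
      fix k
      show "real (card {(k1, k2, k3). (k, k1, k2, k3) \<in> Sres \<alpha> C0 m N N1 N2 N3}) \<le> CC \<alpha> C0 *
        (real (min N2 N3) powr (2 - \<alpha>) * ln (2 + real N1) + real N1)"
      proof (cases "N2 \<le> N3")
        case True
        then show ?thesis using Sk_b[OF ab h(5)] by (simp add: min_def)
      next
        case False
        then show ?thesis using Sk_a[OF ab h(5)] by (simp add: min_def)
      qed
      show "real (card {(k1, k2, k3). (k, k1, k2, k3) \<in> Sres \<alpha> C0 m N N1 N2 N3}) \<le> CC \<alpha> C0 *
        (real (min N1 N2) powr (2 - \<alpha>) * ln (2 + real N3) + real N3)"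
      proof (cases "N1 \<le> N2")
        case True
        then show ?thesis using Sk_c[OF ab h(9)] by (simp add: min_def)
      next
        case False
        then show ?thesis using Sk_d[OF ab h(9)] by (simp add: min_def)
      qed
    next
      fix k1
      show "real (card {(k, k2, k3). (k, k1, k2, k3) \<in> Sres \<alpha> C0 m N N1 N2 N3}) \<le> CC \<alpha> C0 *
        (real N3 powr (2 - \<alpha>) * ln (2 + real N2) + real N2)" by (rule Sk1_e[OF ab h(7)])
      show "real (card {(k, k2, k3). (k, k1, k2, k3) \<in> Sres \<alpha> C0 m N N1 N2 N3}) \<le> CC \<alpha> C0 *
        (real N2 powr (2 - \<alpha>) * ln (2 + real N3) + real N3)" by (rule Sk1_f[OF ab h(7) h(9)])
    next
      fix k2
      show "real (card {(k, k1, k3). (k, k1, k2, k3) \<in> Sres \<alpha> C0 m N N1 N2 N3}) \<le> CC \<alpha> C0 *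
        (real N3 powr (2 - \<alpha>) * ln (2 + real N1) + real N1)" by (rule Sk2_g[OF ab h(5)])
      show "real (card {(k, k1, k3). (k, k1, k2, k3) \<in> Sres \<alpha> C0 m N N1 N2 N3}) \<le> CC \<alpha> C0 *
        (real N1 powr (2 - \<alpha>) * ln (2 + real N3) + real N3)" by (rule Sk2_h[OF ab h(9)])
    next
      fix k3
      show "real (card {(k, k1, k2). (k, k1, k2, k3) \<in> Sres \<alpha> C0 m N N1 N2 N3}) \<le> CC \<alpha> C0 *
        (real N1 powr (2 - \<alpha>) * ln (2 + real N2) + real N2)" by (rule Sk3_i[OF ab h(7)])
      show "real (card {(k, k1, k2). (k, k1, k2, k3) \<in> Sres \<alpha> C0 m N N1 N2 N3}) \<le> CC \<alpha> C0 *
        (real N2 powr (2 - \<alpha>) * ln (2 + real N1) + real N1)" by (rule Sk3_j[OF ab h(7) h(5)])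
    qed
  qed
qed


end
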